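(* (i) For any prime power $q$ and any integers $k,n$ with $1<k<n-1$, there exists an integer $M(q,k,n)$ such that for every $m\geq M(q,k,n)$ there exists a $k$-dimensional linear MRD code in $\mathbb{F}_{q^m}^{n}$ that is not a generalized Gabidulin code. (ii) An integer $M(q,k,n)$ with this property can be taken to be the minimum $m\in\mathbb N$ satisfying $$1-\sum_{r=0}^k r\binom{k}{k-r}_q\binom{n-k}{r}_q q^{r^2}q^{-m}>(m-1)\,q^{-(m-1)(n-k-1)(k-1)} .$$
   Context: $\binom{a}{b}_q$ is the Gaussian binomial coefficient (number of $b$-dimensional subspaces of $\mathbb{F}_q^a$). Fix an $\mathbb{F}_q$-basis $b_1,\dots,b_m$ of $\mathbb{F}_{q^m}$; the rank of $v\in\mathbb{F}_{q^m}^n$ is the rank of the matrix $M\in\mathbb{F}_q^{m\times n}$ with $v_j=\sum_i M_{ij}b_i$, and the rank distance is $d_R(u,v)=\mathrm{rk}(u-v)$. A $k$-dimensional linear code is a $k$-dimensional $\mathbb{F}_{q^m}$-subspace of $\mathbb{F}_{q^m}^n$; it is MRD if its minimum rank distance is $n-k+1$. For $s$ coprime to $m$ and $g_1,\dots,g_n\in\mathbb{F}_{q^m}$ linearly independent over $\mathbb{F}_q$, the generalized Gabidulin code of dimension $k$ with parameter $s$ is the row space of the $k\times n$ matrix with $(i,j)$ entry $g_j^{q^{s(i-1)}}$; a generalized Gabidulin code is such a code for some such $s$ and $g_1,\dots,g_n$. *)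

theory Defs
  imports Complex_Main "HOL-Computational_Algebra.Primes"
begin

(* The prime subfield-level F_q inside a finite field of q^m elements:
   it is exactly the set of roots of x^q = x. *)
definition Fsub :: "nat \<Rightarrow> 'a::field set" where
  "Fsub q = {x. x ^ q = x}"

definition lin_indep_on :: "'a::field set \<Rightarrow> nat set \<Rightarrow> (nat \<Rightarrow> 'a) \<Rightarrow> bool" where
  "lin_indep_on S J v \<longleftrightarrow>
     (\<forall>c. (\<forall>j\<in>J. c j \<in> S) \<and> (\<Sum>j\<in>J. c j * v j) = 0 \<longrightarrow> (\<forall>j\<in>J. c j = 0))"

(* rank of v = (v_0,...,v_{n-1}) in F_{q^m}^n: column rank of its coefficient matrix over F_q,
   i.e. the maximal number of F_q-linearly independent entries *)
definition rk :: "nat \<Rightarrow> nat \<Rightarrow> (nat \<Rightarrow> 'a::field) \<Rightarrow> nat" where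
  "rk q n v = Max {card J | J. J \<subseteq> {..<n} \<and> lin_indep_on (Fsub q) J v}"

definition vecs :: "nat \<Rightarrow> (nat \<Rightarrow> 'a::zero) set" where
  "vecs n = {v. \<forall>j\<ge>n. v j = 0}"

definition vspan :: "(nat \<Rightarrow> 'a::field) list \<Rightarrow> (nat \<Rightarrow> 'a) set" where
  "vspan G = {(\<lambda>j. \<Sum>i<length G. c i * (G!i) j) | c. True}"

definition vindep :: "(nat \<Rightarrow> 'a::field) list \<Rightarrow> bool" where
  "vindep G \<longleftrightarrow>
     (\<forall>c. (\<lambda>j. \<Sum>i<length G. c i * (G!i) j) = (\<lambda>j. 0) \<longrightarrow> (\<forall>i<length G. c i = 0))"

definition is_linear_code :: "nat \<Rightarrow> nat \<Rightarrow> (nat \<Rightarrow> 'a::field) set \<Rightarrow> bool" where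
  "is_linear_code n k C \<longleftrightarrow>
     (\<exists>G. length G = k \<and> set G \<subseteq> vecs n \<and> vindep G \<and> C = vspan G)"

definition min_rank_dist :: "nat \<Rightarrow> nat \<Rightarrow> (nat \<Rightarrow> 'a::field) set \<Rightarrow> nat" where
  "min_rank_dist q n C = Min {rk q n (\<lambda>j. u j - v j) | u v. u \<in> C \<and> v \<in> C \<and> u \<noteq> v}"

definition is_MRD :: "nat \<Rightarrow> nat \<Rightarrow> nat \<Rightarrow> (nat \<Rightarrow> 'a::field) set \<Rightarrow> bool" where
  "is_MRD q n k C \<longleftrightarrow> is_linear_code n k C \<and> min_rank_dist q n C = n - k + 1"

definition gen_gabidulin :: "nat \<Rightarrow> nat \<Rightarrow> nat \<Rightarrow> nat \<Rightarrow> (nat \<Rightarrow> 'a::field) set \<Rightarrow> bool" where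
  "gen_gabidulin q m n k C \<longleftrightarrow>
     (\<exists>(s::nat) (g::nat \<Rightarrow> 'a). coprime s m \<and> lin_indep_on (Fsub q) {..<n} g \<and>
        C = vspan (map (\<lambda>i. \<lambda>j. if j < n then g j ^ (q ^ (s * i)) else 0) [0..<k]))"

(* Gaussian binomial coefficient [a choose b]_q (0 if b > a) *)
definition gauss_binom :: "nat \<Rightarrow> nat \<Rightarrow> nat \<Rightarrow> real" where
  "gauss_binom q a b = (\<Prod>i<b. (real q ^ (a - i) - 1) / (real q ^ (i + 1) - 1))"

definition bound_ineq :: "nat \<Rightarrow> nat \<Rightarrow> nat \<Rightarrow> nat \<Rightarrow> bool" where
  "bound_ineq q k n m \<longleftrightarrow>
     1 - (\<Sum>r = 0..k. real r * gauss_binom q k (k - r) * gauss_binom q (n - k) r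
            * real q ^ (r ^ 2) * real q powi (- int m))
     > (real m - 1) * real q powi (- ((int m - 1) * (int n - int k - 1) * (int k - 1)))"

definition M_bound :: "nat \<Rightarrow> nat \<Rightarrow> nat \<Rightarrow> nat" where
  "M_bound q k n = (LEAST m. 0 < m \<and> bound_ineq q k n m)"

end

theory Submission
  imports Defs "HOL-Computational_Algebra.Polynomial" "HOL-Library.FuncSet"
begin


lemma gb_0[simp]: "gauss_binom q a 0 = 1"
  by (simp add: gauss_binom_def)

lemma gb_Suc: "gauss_binom q a (Suc b) = gauss_binom q a b * ((real q ^ (a - b) - 1) / (real q ^ (b + 1) - 1))"
  by (simp add: gauss_binom_def)

lemma gb_zero: assumes "a < b" shows "gauss_binom q a b = 0"
proof -
  have "a \<in> {..<b}" using assms by simp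
  moreover have "(real q ^ (a - a) - 1) / (real q ^ (a + 1) - 1) = 0" by simp
  ultimately show ?thesis unfolding gauss_binom_def
    by (meson finite_lessThan prod_zero)
qed

lemma gb_nonneg: assumes "q \<ge> 1" shows "gauss_binom q a b \<ge> 0"
  unfolding gauss_binom_def
proof (rule prod_nonneg)
  fix i assume "i \<in> {..<b}"
  have "real q ^ (a - i) \<ge> 1" using assms by (simp add: one_le_power)
  moreover have "real q ^ (i + 1) \<ge> 1" using assms by (simp add: one_le_power del: power_Suc)
  ultimately show "0 \<le> (real q ^ (a - i) - 1) / (real q ^ (i + 1) - 1)" by simp
qed

lemma gb_SucSuc: assumes "q \<ge> 2"
  shows "gauss_binom q (Suc a) (Suc b) = gauss_binom q a b * ((real q ^ (Suc a) - 1) / (real q ^ (b + 1) - 1))"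
proof -
  have "gauss_binom q (Suc a) (Suc b) = (\<Prod>i<Suc b. (real q ^ (Suc a - i) - 1)) / (\<Prod>i<Suc b. (real q ^ (i + 1) - 1))"
    unfolding gauss_binom_def by (simp add: prod_dividef)
  also have "(\<Prod>i<Suc b. (real q ^ (Suc a - i) - 1)) = (real q ^ Suc a - 1) * (\<Prod>i<b. (real q ^ (a - i) - 1))"
    by (subst prod.lessThan_Suc_shift) simp
  also have "(\<Prod>i<Suc b. (real q ^ (i + 1) - 1)) = (\<Prod>i<b. (real q ^ (i + 1) - 1)) * (real q ^ (b + 1) - 1)"
    by simp
  finally show ?thesis unfolding gauss_binom_def by (auto simp: prod_dividef mult_ac)
qed

lemma pow_gt1: assumes "q \<ge> 2" shows "real q ^ (Suc b) - 1 > 0"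
proof -
  have "real q ^ Suc b \<ge> real q ^ 1" using assms by (intro power_increasing) auto
  then show ?thesis using assms by (simp del: power_Suc)
qed

lemma pascal1: assumes "q \<ge> 2"
  shows "gauss_binom q (Suc a) (Suc b) = gauss_binom q a b + real q ^ Suc b * gauss_binom q a (Suc b)"
proof (cases "b \<le> a")
  case True
  have d: "real q ^ (b + 1) - 1 \<noteq> 0" using pow_gt1[OF assms, of b] by simp
  have e: "real q ^ Suc a = real q ^ Suc b * real q ^ (a - b)"
    using True by (simp add: power_add[symmetric])
  show ?thesis unfolding gb_SucSuc[OF assms] gb_Suc[of q a b] using d e
    by (simp add: field_simps, blast)
next
  case False
  then show ?thesis using gb_zero by simp
qed

lemma pascal2: assumes "q \<ge> 2"
  shows "gauss_binom q (Suc a) (Suc b) = real q ^ (a - b) * gauss_binom q a b + gauss_binom q a (Suc b)"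
proof (cases "b \<le> a")
  case True
  have d: "real q ^ (b + 1) - 1 \<noteq> 0" using pow_gt1[OF assms, of b] by simp
  have e: "real q ^ Suc a = real q ^ Suc b * real q ^ (a - b)"
    using True by (simp add: power_add[symmetric])
  show ?thesis unfolding gb_SucSuc[OF assms] gb_Suc[of q a b] using d e
    by (simp add: field_simps, blast)
next
  case False
  then show ?thesis using gb_zero by simp
qed

lemma gb_ge1: assumes "q \<ge> 2" "b \<le> a" shows "gauss_binom q a b \<ge> 1"
  using assms(2)
proof (induction a arbitrary: b)
  case 0 then show ?case by simp
next
  case (Suc a)
  show ?case
  proof (cases b)
    case 0 then show ?thesis by simp
  next
    case (Suc b')
    then have "b' \<le> a" using Suc.prems by simp
    have "gauss_binom q a (Suc b') \<ge> 0" using gb_nonneg assms by simp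
    moreover have "real q ^ (a - b') \<ge> 1" using assms by (simp add: one_le_power)
    moreover have "gauss_binom q a b' \<ge> 1" using Suc.IH \<open>b' \<le> a\<close> by simp
    ultimately have "real q ^ (a - b') * gauss_binom q a b' \<ge> 1"
      by (metis mult_mono' mult_1 order_trans zero_le_one)
    then show ?thesis unfolding Suc pascal2[OF assms(1)]
      using \<open>gauss_binom q a (Suc b') \<ge> 0\<close> by linarith
  qed
qed

lemma gb_self: assumes "q \<ge> 2" shows "gauss_binom q a a = 1"
proof (induction a)
  case 0 then show ?case by simp
next
  case (Suc a) then show ?case using pascal1[OF assms, of a a] gb_zero[of a "Suc a"] by simp
qed

lemma gb_sym: assumes "q \<ge> 2" "b \<le> a" shows "gauss_binom q a (a - b) = gauss_binom q a b"
  using assms(2)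
proof (induction a arbitrary: b)
  case 0 then show ?case by simp
next
  case (Suc a)
  show ?case
  proof (cases b)
    case 0 then show ?thesis using gb_self[OF assms(1)] by simp
  next
    case (Suc b')
    then have b': "b' \<le> a" using Suc.prems by simp
    show ?thesis
    proof (cases "b' = a")
      case True then show ?thesis using Suc gb_self[OF assms(1)] by simp
    next
      case False
      then have "a - b' = Suc (a - Suc b')" using b' by simp
      then have "gauss_binom q (Suc a) (Suc a - b) = gauss_binom q (Suc a) (Suc (a - Suc b'))"
        using Suc by simp
      also have "\<dots> = real q ^ (a - (a - Suc b')) * gauss_binom q a (a - Suc b') + gauss_binom q a (Suc (a - Suc b'))"
        by (rule pascal2[OF assms(1)])
      also have "a - (a - Suc b') = Suc b'" using b' False by simp
      also have "gauss_binom q a (a - Suc b') = gauss_binom q a (Suc b')"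
        using Suc.IH[of "Suc b'"] b' False by simp
      also have "gauss_binom q a (Suc (a - Suc b')) = gauss_binom q a b'"
        using Suc.IH[of b'] b' \<open>a - b' = Suc (a - Suc b')\<close> by simp
      finally show ?thesis unfolding Suc pascal1[OF assms(1)] by simp
    qed
  qed
qed

lemma gb_nz: assumes "gauss_binom q a b \<noteq> 0" shows "b \<le> a"
  using gb_zero assms by (meson not_le)

lemma vand_term: assumes "q \<ge> 2"
  shows "gauss_binom q a (c' - j) * gauss_binom q (Suc b) (Suc j) * real q ^ (Suc j * (a + Suc j - Suc c'))
     = gauss_binom q a (c' - j) * gauss_binom q b (Suc j) * real q ^ (Suc j * (a + Suc j - Suc c'))
         + real q ^ (a + b - c') * (gauss_binom q a (c' - j) * gauss_binom q b j * real q ^ (j * (a + j - c')))"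
proof (cases "gauss_binom q a (c' - j) * gauss_binom q b j = 0")
  case True
  then show ?thesis unfolding pascal2[OF assms, of b j] by (simp add: distrib_left distrib_right, blast)
next
  case False
  then have h1: "c' - j \<le> a" and h2: "j \<le> b" using gb_nz by auto
  have e: "b - j + Suc j * (a + Suc j - Suc c') = a + b - c' + j * (a + j - c')"
  proof -
    define t where "t = a + j - c'"
    have "a + Suc j - Suc c' = t" unfolding t_def by simp
    moreover have "a + b - c' = t + (b - j)" using h1 h2 unfolding t_def by simp
    ultimately show ?thesis unfolding t_def[symmetric] by simp
  qed
  then have "real q ^ (b - j) * real q ^ (Suc j * (a + Suc j - Suc c')) = real q ^ (a + b - c') * real q ^ (j * (a + j - c'))"
    by (metis power_add e)
  then show ?thesis unfolding pascal2[OF assms, of b j]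
    by (simp add: distrib_left distrib_right mult_ac)
qed

lemma vandermonde: assumes "q \<ge> 2"
  shows "gauss_binom q (a + b) c = (\<Sum>j=0..c. gauss_binom q a (c - j) * gauss_binom q b j * real q ^ (j * (a + j - c)))"
proof (induction b arbitrary: c)
  case 0
  have "(\<Sum>j=0..c. gauss_binom q a (c - j) * gauss_binom q 0 j * real q ^ (j * (a + j - c)))
        = (\<Sum>j\<in>{0}. gauss_binom q a (c - j) * gauss_binom q 0 j * real q ^ (j * (a + j - c)))"
    by (rule sum.mono_neutral_right) (auto simp: gb_zero)
  then show ?case by simp
next
  case (Suc b)
  note IH = Suc.IH
  show ?case
  proof (cases c)
    case 0 then show ?thesis by simp
  next
    case (Suc c')
    define g where "g j = gauss_binom q a (Suc c' - j) * gauss_binom q b j * real q ^ (j * (a + j - Suc c'))" for j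
    define h where "h j = real q ^ (a + b - c') * (gauss_binom q a (c' - j) * gauss_binom q b j * real q ^ (j * (a + j - c')))" for j
    have "(\<Sum>j=0..Suc c'. gauss_binom q a (Suc c' - j) * gauss_binom q (Suc b) j * real q ^ (j * (a + j - Suc c')))
       = gauss_binom q a (Suc c') + (\<Sum>j=0..c'. gauss_binom q a (c' - j) * gauss_binom q (Suc b) (Suc j) * real q ^ (Suc j * (a + Suc j - Suc c')))"
      by (simp only: sum.atLeast0_atMost_Suc_shift comp_def diff_Suc_Suc) simp
    also have "(\<Sum>j=0..c'. gauss_binom q a (c' - j) * gauss_binom q (Suc b) (Suc j) * real q ^ (Suc j * (a + Suc j - Suc c')))
       = (\<Sum>j=0..c'. g (Suc j)) + (\<Sum>j=0..c'. h j)"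
      unfolding sum.distrib[symmetric] g_def h_def by (rule sum.cong[OF refl]) (simp only: vand_term[OF assms] diff_Suc_Suc)
    also have "(\<Sum>j=0..c'. h j) = real q ^ (a + b - c') * gauss_binom q (a + b) c'"
      unfolding h_def IH by (simp add: sum_distrib_left)
    also have "gauss_binom q a (Suc c') + ((\<Sum>j=0..c'. g (Suc j)) + real q ^ (a + b - c') * gauss_binom q (a + b) c')
        = (g 0 + (\<Sum>j=0..c'. g (Suc j))) + real q ^ (a + b - c') * gauss_binom q (a + b) c'"
      by (simp add: g_def)
    also have "g 0 + (\<Sum>j=0..c'. g (Suc j)) = (\<Sum>j=0..Suc c'. g j)"
      by (simp only: sum.atLeast0_atMost_Suc_shift comp_def)
    also have "\<dots> = gauss_binom q (a + b) (Suc c')" unfolding g_def by (rule IH[symmetric])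
    also have "gauss_binom q (a + b) (Suc c') + real q ^ (a + b - c') * gauss_binom q (a + b) c' = gauss_binom q (a + Suc b) (Suc c')"
      using pascal2[OF assms, of "a + b" c'] by simp
    finally show ?thesis unfolding Suc by simp
  qed
qed


lemma fermat_field:
  fixes x :: "'a::{field,finite}"
  shows "x ^ card (UNIV :: 'a set) = x"
proof (cases "x = 0")
  case True
  have "card (UNIV :: 'a set) > 0" by (simp add: finite_UNIV_card_ge_0)
  then show ?thesis using True by (simp add: zero_power)
next
  case False
  define U where "U = (UNIV :: 'a set) - {0}"
  have fU: "finite U" unfolding U_def by simp
  have bij: "bij_betw (\<lambda>y. x * y) U U"
    by (rule bij_betwI[where g="\<lambda>y. y / x"]) (use False in \<open>auto simp: U_def\<close>)
  have "(\<Prod>y\<in>U. x * y) = (\<Prod>y\<in>U. y)"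
    using prod.reindex_bij_betw[OF bij, of "\<lambda>y. y"] by simp
  moreover have "(\<Prod>y\<in>U. x * y) = x ^ card U * (\<Prod>y\<in>U. y)"
    by (simp add: prod.distrib)
  moreover have "(\<Prod>y\<in>U. y) \<noteq> 0" using fU unfolding U_def by simp
  ultimately have "x ^ card U = 1" by simp
  moreover have "card (UNIV :: 'a set) = Suc (card U)"
  proof -
    have "card U = card (UNIV::'a set) - 1" unfolding U_def by (simp add: card_Diff_singleton)
    moreover have "card (UNIV :: 'a set) > 0" by (simp add: finite_UNIV_card_ge_0)
    ultimately show ?thesis by simp
  qed
  ultimately show ?thesis by simp
qed

lemma Fsub_0: "q > 0 \<Longrightarrow> (0::'a::field) \<in> Fsub q" by (simp add: Fsub_def zero_power)
lemma Fsub_1: "(1::'a::field) \<in> Fsub q" by (simp add: Fsub_def)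
lemma Fsub_mult: "x \<in> Fsub q \<Longrightarrow> y \<in> Fsub q \<Longrightarrow> (x * y :: 'a::field) \<in> Fsub q"
  by (simp add: Fsub_def power_mult_distrib)
lemma Fsub_div: "x \<in> Fsub q \<Longrightarrow> y \<in> Fsub q \<Longrightarrow> (x / y :: 'a::field) \<in> Fsub q"
  by (simp add: Fsub_def power_divide)

lemma card_Fsub: assumes "q \<ge> 2" shows "card (Fsub q :: 'a::{field,finite} set) \<le> q"
proof -
  define p :: "'a poly" where "p = monom 1 q - [:0, 1:]"
  have dm: "degree (monom (1::'a) q) = q" by (simp add: degree_monom_eq)
  have d1: "degree [:0, 1::'a:] = 1" by simp
  have "degree (monom (1::'a) q + - [:0, 1:]) = q" using assms dm d1 by (subst degree_add_eq_left) auto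
  then have dp: "degree p = q" unfolding p_def by (metis diff_conv_add_uminus)
  then have "p \<noteq> 0" using assms by auto
  have "Fsub q = {x. poly p x = 0}" unfolding p_def Fsub_def by (simp add: poly_monom)
  then show ?thesis using card_poly_roots_bound[OF \<open>p \<noteq> 0\<close>] dp by simp
qed


lemma indep_empty: "lin_indep_on S {} v" by (simp add: lin_indep_on_def)

lemma indep_subset: assumes "lin_indep_on S J v" "I \<subseteq> J" "finite J" "0 \<in> S"
  shows "lin_indep_on S I v"
  unfolding lin_indep_on_def
proof (intro allI impI ballI)
  fix c j assume h: "(\<forall>j\<in>I. c j \<in> S) \<and> (\<Sum>j\<in>I. c j * v j) = 0" and j: "j \<in> I"
  define c' where "c' i = (if i \<in> I then c i else 0)" for i
  have "(\<Sum>j\<in>J. c' j * v j) = (\<Sum>j\<in>I. c' j * v j)"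
    by (rule sum.mono_neutral_right) (use assms in \<open>auto simp: c'_def\<close>)
  also have "\<dots> = 0" using h by (simp add: c'_def)
  finally have s0: "(\<Sum>j\<in>J. c' j * v j) = 0" .
  have "\<forall>j\<in>J. c' j \<in> S" using h \<open>0 \<in> S\<close> by (auto simp: c'_def)
  then have "\<forall>j\<in>J. c' j = 0" using assms(1) s0 unfolding lin_indep_on_def by blast
  then show "c j = 0" using j assms(2) by (force simp: c'_def)
qed

lemma rk_set_finite: "finite {card J | J. J \<subseteq> {..<n} \<and> lin_indep_on S J v}"
proof -
  have "{card J | J. J \<subseteq> {..<n} \<and> lin_indep_on S J v} \<subseteq> card ` Pow {..<n}" by auto
  then show ?thesis by (rule finite_subset) simp
qed

lemma rk_set_ne: "{card J | J. J \<subseteq> {..<n} \<and> lin_indep_on S J v} \<noteq> {}"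
  using indep_empty by blast

lemma rk_ge: assumes "J \<subseteq> {..<n}" "lin_indep_on (Fsub q) J v" shows "card J \<le> rk q n v"
  unfolding rk_def by (rule Max_ge[OF rk_set_finite]) (use assms in blast)

lemma rk_obtain: obtains J where "J \<subseteq> {..<n}" "lin_indep_on (Fsub q) J v" "card J = rk q n v"
proof -
  have "rk q n v \<in> {card J | J. J \<subseteq> {..<n} \<and> lin_indep_on (Fsub q) J v}"
    unfolding rk_def by (rule Max_in[OF rk_set_finite rk_set_ne])
  then obtain J where "rk q n v = card J" "J \<subseteq> {..<n}" "lin_indep_on (Fsub q) J v" by auto
  then show ?thesis using that by simp
qed

lemma rk_le_n: "rk q n v \<le> n"
proof -
  obtain J where "J \<subseteq> {..<n}" "card J = rk q n v" by (rule rk_obtain)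
  then show ?thesis using card_mono[of "{..<n}" J] by simp
qed

lemma indep_nonzero: assumes "lin_indep_on (Fsub q) J v" "j \<in> J" "finite J" "q > 0"
  shows "(v j :: 'a::field) \<noteq> 0"
proof
  assume v0: "v j = 0"
  define c where "c i = (if i = j then 1 else (0::'a))" for i
  have "\<forall>i\<in>J. c i \<in> Fsub q" by (auto simp: c_def Fsub_0 assms(4) Fsub_1)
  moreover have "(\<Sum>i\<in>J. c i * v i) = 0"
  proof -
    have "(\<Sum>i\<in>J. c i * v i) = (\<Sum>i\<in>J. if i = j then v j else 0)"
      by (rule sum.cong) (auto simp: c_def)
    then show ?thesis using assms(2,3) v0 by simp
  qed
  ultimately have "c j = 0" using assms(1,2) unfolding lin_indep_on_def by blast
  then show False by (simp add: c_def)
qed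

lemma rk_le_support: assumes "q > 0"
  shows "rk q n (v :: nat \<Rightarrow> 'a::field) \<le> card {j \<in> {..<n}. v j \<noteq> 0}"
proof -
  obtain J where J: "J \<subseteq> {..<n}" "lin_indep_on (Fsub q) J v" "card J = rk q n v" by (rule rk_obtain)
  have fJ: "finite J" using J(1) finite_subset by blast
  have "J \<subseteq> {j \<in> {..<n}. v j \<noteq> 0}" using indep_nonzero[OF J(2) _ fJ assms] J(1) by auto
  then have "card J \<le> card {j \<in> {..<n}. v j \<noteq> 0}" by (rule card_mono[rotated]) simp
  then show ?thesis using J by simp
qed

lemma indep_scale: assumes "(l::'a::field) \<noteq> 0"
  shows "lin_indep_on S J (\<lambda>j. l * v j) \<longleftrightarrow> lin_indep_on S J v"
proof -
  have "(\<Sum>j\<in>J. c j * (l * v j)) = l * (\<Sum>j\<in>J. c j * v j)" for c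
    by (simp add: sum_distrib_left mult_ac)
  then show ?thesis unfolding lin_indep_on_def using assms by simp
qed

lemma rk_scale: assumes "(l::'a::field) \<noteq> 0" shows "rk q n (\<lambda>j. l * v j) = rk q n v"
  unfolding rk_def indep_scale[OF assms] ..

lemma rk_ext_ge: "rk q n w \<le> rk q (Suc n) (w(n := a))"
proof -
  obtain J where J: "J \<subseteq> {..<n}" "lin_indep_on (Fsub q) J w" "card J = rk q n w" by (rule rk_obtain)
  have "(\<Sum>j\<in>J. c j * (w(n := a)) j) = (\<Sum>j\<in>J. c j * w j)" for c
    by (rule sum.cong) (use J(1) in auto)
  then have "lin_indep_on (Fsub q) J (w(n := a))" using J(2) unfolding lin_indep_on_def by simp
  moreover have "J \<subseteq> {..<Suc n}" using J(1) by auto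
  ultimately have "card J \<le> rk q (Suc n) (w(n := a))" by (rule rk_ge[rotated])
  then show ?thesis using J(3) by simp
qed

lemma rk_key:
  assumes "q \<ge> 2"
  shows "card {a. rk q (Suc n) ((w :: nat \<Rightarrow> 'a::{field,finite})(n := a)) \<le> rk q n w} \<le> q ^ rk q n w"
proof -
  define r where "r = rk q n w"
  obtain J where J: "J \<subseteq> {..<n}" "lin_indep_on (Fsub q) J w" "card J = r"
    unfolding r_def by (rule rk_obtain)
  have fJ: "finite J" using J(1) finite_subset by blast
  have nJ: "n \<notin> J" using J(1) by auto
  define f where "f t = - (\<Sum>j\<in>J. t j * w j)" for t :: "nat \<Rightarrow> 'a"
  have sub: "{a. rk q (Suc n) (w(n := a)) \<le> r} \<subseteq> f ` (PiE J (\<lambda>_. Fsub q))"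
  proof
    fix a assume "a \<in> {a. rk q (Suc n) (w(n := a)) \<le> r}"
    then have ar: "rk q (Suc n) (w(n := a)) \<le> r" by simp
    have "\<not> lin_indep_on (Fsub q) (insert n J) (w(n := a))"
    proof
      assume "lin_indep_on (Fsub q) (insert n J) (w(n := a))"
      moreover have "insert n J \<subseteq> {..<Suc n}" using J(1) by auto
      ultimately have "card (insert n J) \<le> r" using rk_ge ar by (meson order_trans)
      then show False using fJ nJ J(3) by simp
    qed
    then obtain c where c: "\<forall>j\<in>insert n J. c j \<in> Fsub q"
       "(\<Sum>j\<in>insert n J. c j * (w(n := a)) j) = 0" "\<exists>j\<in>insert n J. c j \<noteq> 0"
      unfolding lin_indep_on_def by blast
    have sJ: "(\<Sum>j\<in>J. c j * (w(n := a)) j) = (\<Sum>j\<in>J. c j * w j)"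
      by (rule sum.cong) (use nJ in auto)
    have eq: "c n * a + (\<Sum>j\<in>J. c j * w j) = 0"
      using c(2) fJ nJ sJ by simp
    have cn: "c n \<noteq> 0"
    proof
      assume "c n = 0"
      then have "(\<Sum>j\<in>J. c j * w j) = 0" using eq by simp
      then have "\<forall>j\<in>J. c j = 0" using J(2) c(1) unfolding lin_indep_on_def by blast
      then show False using c(3) \<open>c n = 0\<close> by auto
    qed
    define t where "t = restrict (\<lambda>j. c j / c n) J"
    have "t \<in> PiE J (\<lambda>_. Fsub q)" unfolding t_def using c(1) Fsub_div by auto
    moreover have "a = f t"
    proof -
      have "(\<Sum>j\<in>J. t j * w j) = (\<Sum>j\<in>J. c j * w j) / c n"
        unfolding t_def by (simp add: sum_divide_distrib)
      then have "f t = - ((\<Sum>j\<in>J. c j * w j) / c n)" by (simp add: f_def)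
      also have "(\<Sum>j\<in>J. c j * w j) = - (c n * a)" using eq by (simp add: eq_neg_iff_add_eq_0 add.commute)
      finally show ?thesis using cn by simp
    qed
    ultimately show "a \<in> f ` (PiE J (\<lambda>_. Fsub q))" by blast
  qed
  have "card {a. rk q (Suc n) (w(n := a)) \<le> r} \<le> card (f ` (PiE J (\<lambda>_. Fsub q)))"
    by (rule card_mono[OF _ sub]) simp
  also have "\<dots> \<le> card (PiE J (\<lambda>_. Fsub q :: 'a set))" by (rule card_image_le) (simp add: fJ finite_PiE)
  also have "\<dots> = card (Fsub q :: 'a set) ^ card J" by (simp add: card_PiE fJ)
  also have "\<dots> \<le> q ^ r" using card_Fsub[OF assms] J(3) power_mono by blast
  finally show ?thesis unfolding r_def .
qed


lemma vecs_0: "vecs 0 = {\<lambda>_. 0}" by (auto simp: vecs_def)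

lemma vecs_Suc: "vecs (Suc n) = (\<lambda>(w, a). w(n := a)) ` (vecs n \<times> UNIV)"
proof (intro equalityI subsetI)
  fix v assume v: "v \<in> vecs (Suc n)"
  have "v = (\<lambda>(w, a). w(n := a)) (v(n := 0), v n)" by simp
  moreover have "v(n := 0) \<in> vecs n" using v by (auto simp: vecs_def)
  ultimately show "v \<in> (\<lambda>(w, a). w(n := a)) ` (vecs n \<times> UNIV)" by blast
next
  fix v assume "v \<in> (\<lambda>(w, a). w(n := a)) ` (vecs n \<times> UNIV)"
  then show "v \<in> vecs (Suc n)" by (auto simp: vecs_def)
qed

lemma inj_ext: "inj_on (\<lambda>(w, a). w(n := a)) (vecs n \<times> UNIV)"
proof (rule inj_onI, clarify)
  fix w a w' a' assume h: "w \<in> vecs n" "w' \<in> vecs n" "w(n := a) = w'(n := a')"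
  then have "a = a'" by (metis fun_upd_same)
  moreover have "w = w'"
  proof
    fix j show "w j = w' j"
    proof (cases "j = n")
      case True then show ?thesis using h(1,2) by (simp add: vecs_def)
    next
      case False then show ?thesis using h(3) by (metis fun_upd_other)
    qed
  qed
  ultimately show "w = w' \<and> a = a'" by simp
qed

lemma finite_vecs: "finite (vecs n :: (nat \<Rightarrow> 'a::{zero,finite}) set)"
  by (induction n) (simp_all add: vecs_0 vecs_Suc)

lemma card_vecs: "card (vecs n :: (nat \<Rightarrow> 'a::{zero,finite}) set) = card (UNIV :: 'a set) ^ n"
proof (induction n)
  case 0 then show ?case by (simp add: vecs_0)
next
  case (Suc n)
  have "card (vecs (Suc n) :: (nat \<Rightarrow> 'a) set) = card ((vecs n :: (nat \<Rightarrow> 'a) set) \<times> (UNIV :: 'a set))"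
    unfolding vecs_Suc by (simp add: card_image inj_ext)
  also have "\<dots> = card (UNIV :: 'a set) ^ n * card (UNIV :: 'a set)" using Suc by (simp add: card_cartesian_product)
  finally show ?case by simp
qed

lemma L_step:
  assumes "q \<ge> 2"
  shows "card {w \<in> vecs (Suc n). rk q (Suc n) (w :: nat \<Rightarrow> 'a::{field,finite}) \<le> d}
     \<le> card {w \<in> vecs n. rk q n (w :: nat \<Rightarrow> 'a) < d} * card (UNIV :: 'a set) + card {w \<in> vecs n. rk q n (w :: nat \<Rightarrow> 'a) = d} * q ^ d"
proof -
  define A1 where "A1 = {w \<in> vecs n. rk q n (w :: nat \<Rightarrow> 'a) < d}"
  define A2 where "A2 = {w \<in> vecs n. rk q n (w :: nat \<Rightarrow> 'a) = d}"
  define f where "f = (\<lambda>(w :: nat \<Rightarrow> 'a, a). w(n := a))"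
  have sub: "{w \<in> vecs (Suc n). rk q (Suc n) (w :: nat \<Rightarrow> 'a) \<le> d} \<subseteq> f ` (A1 \<times> UNIV \<union> Sigma A2 (\<lambda>w. {a. rk q (Suc n) (w(n := a)) \<le> rk q n w}))"
  proof
    fix v :: "nat \<Rightarrow> 'a" assume v: "v \<in> {w \<in> vecs (Suc n). rk q (Suc n) w \<le> d}"
    define w where "w = v(n := 0)"
    have w: "w \<in> vecs n" using v by (auto simp: vecs_def w_def)
    have vw: "v = w(n := v n)" by (simp add: w_def)
    have "rk q n w \<le> rk q (Suc n) v" using rk_ext_ge[of q n w "v n"] vw by simp
    then have "(w, v n) \<in> A1 \<times> UNIV \<union> Sigma A2 (\<lambda>w. {a. rk q (Suc n) (w(n := a)) \<le> rk q n w})"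
      using v w vw unfolding A1_def A2_def by (cases "rk q n w < d") auto
    moreover have "v = f (w, v n)" using vw by (simp add: f_def)
    ultimately show "v \<in> f ` (A1 \<times> UNIV \<union> Sigma A2 (\<lambda>w. {a. rk q (Suc n) (w(n := a)) \<le> rk q n w}))"
      by blast
  qed
  have fA1: "finite A1" unfolding A1_def by (rule finite_subset[OF _ finite_vecs]) auto
  have fA2: "finite A2" unfolding A2_def by (rule finite_subset[OF _ finite_vecs]) auto
  have fin: "finite (A1 \<times> UNIV \<union> Sigma A2 (\<lambda>w. {a. rk q (Suc n) (w(n := a)) \<le> rk q n w}))"
    using fA1 fA2 by auto
  have "card {w \<in> vecs (Suc n). rk q (Suc n) (w :: nat \<Rightarrow> 'a) \<le> d} \<le> card (f ` (A1 \<times> UNIV \<union> Sigma A2 (\<lambda>w. {a. rk q (Suc n) (w(n := a)) \<le> rk q n w})))"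
    by (rule card_mono[OF _ sub]) (use fin in simp)
  also have "\<dots> \<le> card (A1 \<times> UNIV \<union> Sigma A2 (\<lambda>w. {a. rk q (Suc n) (w(n := a)) \<le> rk q n w}))"
    by (rule card_image_le[OF fin])
  also have "\<dots> \<le> card (A1 \<times> (UNIV :: 'a set)) + card (Sigma A2 (\<lambda>w. {a. rk q (Suc n) (w(n := a)) \<le> rk q n w}))"
    by (rule card_Un_le)
  also have "card (A1 \<times> (UNIV :: 'a set)) + card (Sigma A2 (\<lambda>w. {a. rk q (Suc n) (w(n := a)) \<le> rk q n w})) \<le> card A1 * card (UNIV :: 'a set) + card A2 * q ^ d"
  proof -
    have e1: "card (A1 \<times> (UNIV :: 'a set)) = card A1 * card (UNIV :: 'a set)" by (simp add: card_cartesian_product)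
    have "card (Sigma A2 (\<lambda>w. {a. rk q (Suc n) (w(n := a)) \<le> rk q n w})) = (\<Sum>w\<in>A2. card {a. rk q (Suc n) (w(n := a)) \<le> rk q n w})"
      by (rule card_SigmaI) (simp_all add: fA2)
    also have "\<dots> \<le> (\<Sum>w\<in>A2. q ^ d)"
    proof (rule sum_mono)
      fix w assume "w \<in> A2"
      then have "rk q n w = d" by (simp add: A2_def)
      then show "card {a. rk q (Suc n) (w(n := a)) \<le> rk q n w} \<le> q ^ d" using rk_key[OF assms, of n w] by simp
    qed
    also have "\<dots> = card A2 * q ^ d" by simp
    finally show ?thesis using e1 by linarith
  qed
  finally show ?thesis unfolding A1_def A2_def .
qed

lemma L_bound:
  assumes "q \<ge> 2" "d \<le> n"
  shows "real (card {w \<in> vecs n. rk q n (w :: nat \<Rightarrow> 'a::{field,finite}) \<le> d}) \<le> gauss_binom q n d * real (card (UNIV :: 'a set)) ^ d"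
  using assms(2)
proof (induction n arbitrary: d)
  case 0
  then have "d = 0" by simp
  have "card {w \<in> vecs 0. rk q 0 (w :: nat \<Rightarrow> 'a) \<le> d} \<le> card (vecs 0 :: (nat \<Rightarrow> 'a) set)"
    by (rule card_mono) (auto simp: vecs_0)
  then show ?case using \<open>d = 0\<close> by (simp add: vecs_0)
next
  case (Suc n)
  note IH = Suc.IH
  show ?case
  proof (cases "d = Suc n")
    case True
    have "card {w \<in> vecs (Suc n). rk q (Suc n) (w :: nat \<Rightarrow> 'a) \<le> d} \<le> card (vecs (Suc n) :: (nat \<Rightarrow> 'a) set)"
      by (rule card_mono) (auto simp: finite_vecs)
    then have "real (card {w \<in> vecs (Suc n). rk q (Suc n) (w :: nat \<Rightarrow> 'a) \<le> d}) \<le> real (card (UNIV :: 'a set)) ^ Suc n"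
      by (metis of_nat_le_iff of_nat_power card_vecs)
    then show ?thesis using True gb_self[OF assms(1)] by simp
  next
    case False
    then have dn: "d \<le> n" using Suc.prems by simp
    have A2: "card {w \<in> vecs n. rk q n (w :: nat \<Rightarrow> 'a) = d} \<le> card {w \<in> vecs n. rk q n (w :: nat \<Rightarrow> 'a) \<le> d}"
      by (rule card_mono) (auto simp: finite_vecs)
    have Q0: "real (card (UNIV :: 'a set)) \<ge> 0" by simp
    show ?thesis
    proof (cases d)
      case 0
      have "{w \<in> vecs n. rk q n (w :: nat \<Rightarrow> 'a) < d} = {}" using 0 by simp
      then have "card {w \<in> vecs (Suc n). rk q (Suc n) (w :: nat \<Rightarrow> 'a) \<le> d} \<le> card {w \<in> vecs n. rk q n (w :: nat \<Rightarrow> 'a) = d}"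
        using L_step[where 'a='a, OF assms(1), of n d] 0 by simp
      then have "real (card {w \<in> vecs (Suc n). rk q (Suc n) (w :: nat \<Rightarrow> 'a) \<le> d}) \<le> real (card {w \<in> vecs n. rk q n (w :: nat \<Rightarrow> 'a) \<le> d})"
        using A2 by linarith
      also have "\<dots> \<le> 1" using IH[OF dn] 0 by simp
      finally show ?thesis using 0 by simp
    next
      case (Suc d')
      have A1: "{w \<in> vecs n. rk q n (w :: nat \<Rightarrow> 'a) < d} = {w \<in> vecs n. rk q n (w :: nat \<Rightarrow> 'a) \<le> d'}" using Suc by auto
      have "real (card {w \<in> vecs (Suc n). rk q (Suc n) (w :: nat \<Rightarrow> 'a) \<le> d})
          \<le> real (card {w \<in> vecs n. rk q n (w :: nat \<Rightarrow> 'a) \<le> d'}) * real (card (UNIV :: 'a set)) + real (card {w \<in> vecs n. rk q n (w :: nat \<Rightarrow> 'a) \<le> d}) * real q ^ d"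
      proof -
        have "card {w \<in> vecs (Suc n). rk q (Suc n) (w :: nat \<Rightarrow> 'a) \<le> d}
           \<le> card {w \<in> vecs n. rk q n (w :: nat \<Rightarrow> 'a) \<le> d'} * card (UNIV :: 'a set) + card {w \<in> vecs n. rk q n (w :: nat \<Rightarrow> 'a) \<le> d} * q ^ d"
        proof -
          have "card {w \<in> vecs n. rk q n (w :: nat \<Rightarrow> 'a) = d} * q ^ d \<le> card {w \<in> vecs n. rk q n (w :: nat \<Rightarrow> 'a) \<le> d} * q ^ d"
            using A2 by (rule mult_le_mono1)
          moreover have "card {w \<in> vecs (Suc n). rk q (Suc n) (w :: nat \<Rightarrow> 'a) \<le> d}
     \<le> card {w \<in> vecs n. rk q n (w :: nat \<Rightarrow> 'a) \<le> d'} * card (UNIV :: 'a set) + card {w \<in> vecs n. rk q n (w :: nat \<Rightarrow> 'a) = d} * q ^ d"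
          proof -
            have "card {w \<in> vecs n. rk q n (w :: nat \<Rightarrow> 'a) < d} = card {w \<in> vecs n. rk q n (w :: nat \<Rightarrow> 'a) \<le> d'}"
              using A1 by (rule arg_cong)
            then show ?thesis using L_step[where 'a='a, OF assms(1), of n d] by simp
          qed
          ultimately show ?thesis by linarith
        qed
        then have "real (card {w \<in> vecs (Suc n). rk q (Suc n) (w :: nat \<Rightarrow> 'a) \<le> d})
           \<le> real (card {w \<in> vecs n. rk q n (w :: nat \<Rightarrow> 'a) \<le> d'} * card (UNIV :: 'a set) + card {w \<in> vecs n. rk q n (w :: nat \<Rightarrow> 'a) \<le> d} * q ^ d)"
          by (rule of_nat_mono)
        then show ?thesis by simp
      qed
      also have "\<dots> \<le> (gauss_binom q n d' * real (card (UNIV :: 'a set)) ^ d') * real (card (UNIV :: 'a set)) + (gauss_binom q n d * real (card (UNIV :: 'a set)) ^ d) * real q ^ d"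
        using IH[of d'] IH[OF dn] Suc dn by (intro add_mono mult_right_mono) auto
      also have "\<dots> = (gauss_binom q n d' + real q ^ Suc d' * gauss_binom q n (Suc d')) * real (card (UNIV :: 'a set)) ^ d"
        using Suc by (simp add: algebra_simps)
      also have "\<dots> = gauss_binom q (Suc n) d * real (card (UNIV :: 'a set)) ^ d"
        using pascal1[OF assms(1), of n d'] Suc by simp
      finally show ?thesis .
    qed
  qed
qed


definition comb :: "(nat \<Rightarrow> 'a::field) \<Rightarrow> (nat \<Rightarrow> 'a) list \<Rightarrow> nat \<Rightarrow> 'a" where
  "comb x G = (\<lambda>j. \<Sum>i<length G. x i * (G ! i) j)"

definition Gs :: "nat \<Rightarrow> nat \<Rightarrow> (nat \<Rightarrow> 'a::zero) list set" where
  "Gs k n = {G. set G \<subseteq> vecs n \<and> length G = k}"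

lemma vspan_comb: "vspan G = {comb c G | c. True}"
  by (simp add: vspan_def comb_def)

lemma comb_vecs: assumes "set G \<subseteq> vecs n" shows "comb x G \<in> vecs n"
proof -
  have h: "(G ! i) j = 0" if "i < length G" "n \<le> j" for i j
  proof -
    have "G ! i \<in> vecs n" using assms nth_mem[OF that(1)] by blast
    then show ?thesis using that(2) by (simp add: vecs_def)
  qed
  show ?thesis unfolding vecs_def comb_def by (auto simp: h)
qed

lemma comb_cong: assumes "\<And>i. i < length G \<Longrightarrow> x i = y i" shows "comb x G = comb y G"
  unfolding comb_def using assms by (intro ext sum.cong) auto

lemma comb_diff: "comb (\<lambda>i. x i - y i) G = (\<lambda>j. comb x G j - comb y G j)"
  unfolding comb_def by (simp add: left_diff_distrib sum_subtractf)

lemma comb_scale: "comb (\<lambda>i. l * x i) G = (\<lambda>j. l * comb x G j)"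
  unfolding comb_def by (simp add: sum_distrib_left mult_ac)

lemma finite_Gs: "finite (Gs k n :: (nat \<Rightarrow> 'a::{zero,finite}) list set)"
  unfolding Gs_def by (rule finite_lists_length_eq[OF finite_vecs])

lemma card_Gs: "card (Gs k n :: (nat \<Rightarrow> 'a::{zero,finite}) list set) = (card (UNIV :: 'a set) ^ n) ^ k"
  unfolding Gs_def by (simp add: card_lists_length_eq[OF finite_vecs] card_vecs)

definition rest :: "nat \<Rightarrow> 'b list \<Rightarrow> 'b list" where
  "rest i0 G = take i0 G @ drop (Suc i0) G"

lemma rest_nth: assumes "i0 < length G" "i < length G" "i \<noteq> i0"
  shows "G ! i = (if i < i0 then rest i0 G ! i else rest i0 G ! (i - 1))"
  using assms unfolding rest_def by (auto simp: nth_append min_def nth_take nth_drop)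

lemma rest_len: "i0 < length G \<Longrightarrow> length (rest i0 G) = length G - 1"
  unfolding rest_def by simp

lemma rest_set: "set (rest i0 G) \<subseteq> set G"
  unfolding rest_def using set_take_subset set_drop_subset by (metis Un_least set_append)

lemma fiber_bound:
  fixes x :: "nat \<Rightarrow> 'a::{field,finite}"
  assumes "x i0 \<noteq> 0" "i0 < k"
  shows "card {G \<in> Gs k n. P (comb x G)} \<le> card {w \<in> vecs n. P w} * (card (UNIV :: 'a set) ^ n) ^ (k - 1)"
proof -
  define f where "f G = (comb x G, rest i0 G)" for G :: "(nat \<Rightarrow> 'a) list"
  define T where "T = {w \<in> vecs n. P w} \<times> {xs. set xs \<subseteq> (vecs n :: (nat \<Rightarrow> 'a) set) \<and> length xs = k - 1}"
  have inj: "inj_on f {G \<in> Gs k n. P (comb x G)}"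
  proof (rule inj_onI)
    fix G G' assume G: "G \<in> {G \<in> Gs k n. P (comb x G)}" and G': "G' \<in> {G \<in> Gs k n. P (comb x G)}"
      and eq: "f G = f G'"
    have lG: "length G = k" and lG': "length G' = k" using G G' by (auto simp: Gs_def)
    have c: "comb x G = comb x G'" and r: "rest i0 G = rest i0 G'" using eq by (auto simp: f_def)
    have oth: "G ! i = G' ! i" if "i < k" "i \<noteq> i0" for i
      using rest_nth[of i0 G i] rest_nth[of i0 G' i] that assms(2) lG lG' r by simp
    have "G ! i0 = G' ! i0"
    proof
      fix j
      have "comb x G j = x i0 * (G ! i0) j + (\<Sum>i\<in>{..<k} - {i0}. x i * (G ! i) j)"
        unfolding comb_def lG using assms(2) by (simp add: sum.remove)
      moreover have "comb x G' j = x i0 * (G' ! i0) j + (\<Sum>i\<in>{..<k} - {i0}. x i * (G' ! i) j)"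
        unfolding comb_def lG' using assms(2) by (simp add: sum.remove)
      moreover have "(\<Sum>i\<in>{..<k} - {i0}. x i * (G ! i) j) = (\<Sum>i\<in>{..<k} - {i0}. x i * (G' ! i) j)"
        by (rule sum.cong) (auto simp: oth)
      ultimately have "x i0 * (G ! i0) j = x i0 * (G' ! i0) j" using c by (metis add_right_cancel)
      then show "(G ! i0) j = (G' ! i0) j" using assms(1) by simp
    qed
    then show "G = G'" using oth lG lG' by (metis nth_equalityI)
  qed
  have img: "f ` {G \<in> Gs k n. P (comb x G)} \<subseteq> T"
  proof
    fix y assume "y \<in> f ` {G \<in> Gs k n. P (comb x G)}"
    then obtain G where G: "G \<in> Gs k n" "P (comb x G)" and y: "y = f G" by blast
    have "comb x G \<in> vecs n" using G(1) comb_vecs by (auto simp: Gs_def)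
    moreover have "set (rest i0 G) \<subseteq> vecs n" using G(1) rest_set[of i0 G] unfolding Gs_def by blast
    moreover have "length (rest i0 G) = k - 1" using G(1) assms(2) rest_len by (auto simp: Gs_def)
    ultimately show "y \<in> T" using y G(2) by (simp add: T_def f_def)
  qed
  have fT: "finite T" unfolding T_def
    by (intro finite_cartesian_product finite_lists_length_eq finite_vecs) (rule finite_subset[OF _ finite_vecs], auto)
  have "card {G \<in> Gs k n. P (comb x G)} = card (f ` {G \<in> Gs k n. P (comb x G)})"
    by (rule card_image[OF inj, symmetric])
  also have "\<dots> \<le> card T" by (rule card_mono[OF fT img])
  also have "\<dots> = card {w \<in> vecs n. P w} * (card (UNIV :: 'a set) ^ n) ^ (k - 1)"
    unfolding T_def by (simp add: card_cartesian_product card_lists_length_eq[OF finite_vecs] card_vecs)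
  finally show ?thesis .
qed

definition X0 :: "nat \<Rightarrow> (nat \<Rightarrow> 'a::zero) set" where
  "X0 k = vecs k - {\<lambda>_. 0}"

lemma finite_X0: "finite (X0 k :: (nat \<Rightarrow> 'a::{zero,finite}) set)"
  unfolding X0_def using finite_vecs by simp

lemma card_X0: "card (X0 k :: (nat \<Rightarrow> 'a::{zero,finite}) set) = card (UNIV :: 'a set) ^ k - 1"
proof -
  have "(\<lambda>_. 0) \<in> (vecs k :: (nat \<Rightarrow> 'a) set)" by (simp add: vecs_def)
  then show ?thesis unfolding X0_def by (simp add: card_Diff_singleton finite_vecs card_vecs)
qed

lemma X0_nz: assumes "x \<in> X0 k" obtains i where "i < k" "x i \<noteq> 0"
proof -
  have "x \<in> vecs k" "x \<noteq> (\<lambda>_. 0)" using assms by (auto simp: X0_def)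
  then obtain i where "x i \<noteq> 0" by auto
  moreover have "i < k"
  proof (rule ccontr)
    assume "\<not> i < k"
    then show False using \<open>x \<in> vecs k\<close> \<open>x i \<noteq> 0\<close> unfolding vecs_def by simp
  qed
  ultimately show ?thesis using that by blast
qed

definition badG :: "nat \<Rightarrow> nat \<Rightarrow> nat \<Rightarrow> nat \<Rightarrow> (nat \<Rightarrow> 'a::field) list \<Rightarrow> bool" where
  "badG q k n d G \<longleftrightarrow> (\<exists>x\<in>X0 k. rk q n (comb x G) \<le> d)"

lemma bad_count:
  assumes "q > 0"
  shows "(card (UNIV :: 'a set) - 1) * card {G \<in> Gs k n. badG q k n d (G :: (nat \<Rightarrow> 'a::{field,finite}) list)}
     \<le> (card (UNIV :: 'a set) ^ k - 1) * (card {w \<in> vecs n. rk q n (w :: nat \<Rightarrow> 'a) \<le> d} * (card (UNIV :: 'a set) ^ n) ^ (k - 1))"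
proof -
  define Q where "Q = card (UNIV :: 'a set)"
  define B where "B x G \<longleftrightarrow> rk q n (comb x G) \<le> d" for x and G :: "(nat \<Rightarrow> 'a) list"
  define bad where "bad = {G \<in> Gs k n. badG q k n d (G :: (nat \<Rightarrow> 'a) list)}"
  have fG: "finite (Gs k n :: (nat \<Rightarrow> 'a) list set)" by (rule finite_Gs)
  have fX: "finite (X0 k :: (nat \<Rightarrow> 'a) set)" by (rule finite_X0)
  have lower: "Q - 1 \<le> card {x \<in> X0 k. B x G}" if Gb: "G \<in> bad" for G
  proof -
    obtain x0 where x0: "x0 \<in> X0 k" "B x0 G" using Gb unfolding bad_def badG_def B_def by blast
    obtain i where i: "i < k" "x0 i \<noteq> 0" using X0_nz[OF x0(1)] by blast
    define h where "h l = (\<lambda>i. l * x0 i)" for l :: 'a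
    have "h ` (UNIV - {0}) \<subseteq> {x \<in> X0 k. B x G}"
    proof
      fix y assume "y \<in> h ` (UNIV - {0})"
      then obtain l where l: "l \<noteq> 0" "y = h l" by blast
      have "y \<in> vecs k" using x0(1) l unfolding X0_def vecs_def h_def by auto
      moreover have "y i \<noteq> 0" using l i unfolding h_def by simp
      moreover have "B y G" using x0(2) l by (simp add: B_def h_def comb_scale rk_scale)
      ultimately show "y \<in> {x \<in> X0 k. B x G}" unfolding X0_def by auto
    qed
    moreover have "inj_on h (UNIV - {0})"
    proof (rule inj_onI)
      fix l l' assume "h l = h l'"
      then have "l * x0 i = l' * x0 i" unfolding h_def by meson
      then show "l = l'" using i by simp
    qed
    ultimately have "card (UNIV - {0::'a}) \<le> card {x \<in> X0 k. B x G}"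
      using card_inj_on_le[of h "UNIV - {0}" "{x \<in> X0 k. B x G}"] fX by auto
    then show ?thesis unfolding Q_def by (simp add: card_Diff_singleton)
  qed
  have "(Q - 1) * card bad = (\<Sum>G\<in>bad. Q - 1)" by simp
  also have "\<dots> \<le> (\<Sum>G\<in>bad. card {x \<in> X0 k. B x G})" by (rule sum_mono) (rule lower)
  also have "\<dots> \<le> (\<Sum>G\<in>Gs k n. card {x \<in> X0 k. B x G})"
    by (rule sum_mono2[OF fG]) (auto simp: bad_def)
  also have "\<dots> = (\<Sum>G\<in>Gs k n. \<Sum>x\<in>X0 k. if B x G then 1 else 0)"
    by (rule sum.cong[OF refl]) (simp add: sum.If_cases fX Int_def)
  also have "\<dots> = (\<Sum>x\<in>X0 k. \<Sum>G\<in>Gs k n. if B x G then 1 else 0)" by (rule sum.swap)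
  also have "\<dots> = (\<Sum>x\<in>X0 k. card {G \<in> Gs k n. B x G})"
    by (rule sum.cong[OF refl]) (simp add: sum.If_cases fG Int_def)
  also have "\<dots> \<le> (\<Sum>x\<in>(X0 k :: (nat \<Rightarrow> 'a) set). card {w \<in> vecs n. rk q n (w :: nat \<Rightarrow> 'a) \<le> d} * (Q ^ n) ^ (k - 1))"
  proof (rule sum_mono)
    fix x :: "nat \<Rightarrow> 'a" assume "x \<in> X0 k"
    then obtain i where i: "i < k" "x i \<noteq> 0" by (rule X0_nz)
    show "card {G \<in> Gs k n. B x G} \<le> card {w \<in> vecs n. rk q n (w :: nat \<Rightarrow> 'a) \<le> d} * (Q ^ n) ^ (k - 1)"
      unfolding B_def Q_def by (rule fiber_bound[of x i, OF i(2) i(1)])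
  qed
  also have "\<dots> = (Q ^ k - 1) * (card {w \<in> vecs n. rk q n (w :: nat \<Rightarrow> 'a) \<le> d} * (Q ^ n) ^ (k - 1))"
    by (simp add: card_X0 Q_def)
  finally show ?thesis unfolding Q_def bad_def .
qed


definition gnorm :: "(nat \<Rightarrow> 'a::field) \<Rightarrow> nat \<Rightarrow> 'a" where
  "gnorm h j = (if j = 0 then 1 else h (j - 1))"

definition gB :: "nat \<Rightarrow> nat \<Rightarrow> nat \<Rightarrow> nat \<Rightarrow> (nat \<Rightarrow> 'a::field) \<Rightarrow> (nat \<Rightarrow> 'a) list" where
  "gB q n k s h = map (\<lambda>i j. if j < n then (gnorm h j) ^ (q ^ (s * i)) else 0) [0..<k]"

lemma vspan_img: "vspan B = (\<lambda>c. comb c B) ` vecs (length B)"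
proof (intro equalityI subsetI)
  fix v assume "v \<in> vspan B"
  then obtain c where v: "v = comb c B" by (auto simp: vspan_comb)
  define c' where "c' i = (if i < length B then c i else 0)" for i
  have "comb c B = comb c' B" by (rule comb_cong) (simp add: c'_def)
  moreover have "c' \<in> vecs (length B)" by (simp add: vecs_def c'_def)
  ultimately show "v \<in> (\<lambda>c. comb c B) ` vecs (length B)" using v by blast
next
  fix v assume "v \<in> (\<lambda>c. comb c B) ` vecs (length B)"
  then show "v \<in> vspan B" by (auto simp: vspan_comb)
qed

lemma vspan_card: "card (vspan (B :: (nat \<Rightarrow> 'a::{field,finite}) list)) \<le> card (UNIV :: 'a set) ^ length B"
  unfolding vspan_img by (metis card_image_le card_vecs finite_vecs)

lemma vspan_finite: "finite (vspan (B :: (nat \<Rightarrow> 'a::{field,finite}) list))"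
  unfolding vspan_img by (simp add: finite_vecs)

lemma sub_count:
  assumes "length (B :: (nat \<Rightarrow> 'a::{field,finite}) list) = k"
  shows "card {G \<in> Gs k n. set G \<subseteq> vspan B} \<le> (card (UNIV :: 'a set) ^ k) ^ k"
proof -
  have "card {G \<in> Gs k n. set G \<subseteq> vspan B} \<le> card {xs. set xs \<subseteq> vspan B \<and> length xs = k}"
    by (rule card_mono) (auto simp: Gs_def finite_lists_length_eq vspan_finite)
  also have "\<dots> = card (vspan B) ^ k" by (simp add: card_lists_length_eq vspan_finite)
  also have "\<dots> \<le> (card (UNIV :: 'a set) ^ k) ^ k" using vspan_card[of B] assms by (simp add: power_mono)
  finally show ?thesis .
qed

lemma set_sub_vspan: "set G \<subseteq> vspan (G :: (nat \<Rightarrow> 'a::field) list)"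
proof
  fix v assume "v \<in> set G"
  then obtain i where i: "i < length G" "v = G ! i" by (metis in_set_conv_nth)
  define c :: "nat \<Rightarrow> 'a" where "c l = (if l = i then 1 else 0)" for l :: nat
  have "comb c G = v"
  proof
    fix j
    have "comb c G j = (\<Sum>l<length G. if l = i then (G ! i) j else 0)"
      unfolding comb_def by (rule sum.cong) (auto simp: c_def)
    also have "\<dots> = (G ! i) j" using i(1) by simp
    finally show "comb c G j = v j" using i(2) by simp
  qed
  then show "v \<in> vspan G" by (auto simp: vspan_comb)
qed

lemma frob_mt:
  fixes x :: "'a::{field,finite}"
  assumes "card (UNIV :: 'a set) = q ^ m"
  shows "x ^ (q ^ (m * t)) = x"
proof (induction t)
  case 0 then show ?case by simp
next
  case (Suc t)
  have "x ^ (q ^ (m * Suc t)) = (x ^ (q ^ (m * t))) ^ (q ^ m)"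
    by (simp add: power_mult[symmetric] power_add[symmetric] mult.commute)
  also have "\<dots> = x" using Suc fermat_field[of x] assms by simp
  finally show ?case .
qed

lemma frob:
  fixes x :: "'a::{field,finite}"
  assumes "card (UNIV :: 'a set) = q ^ m"
  shows "x ^ (q ^ (s * i)) = x ^ (q ^ ((s mod m) * i))"
proof -
  have "s * i = (s mod m) * i + m * ((s div m) * i)"
    by (metis add_mult_distrib mod_div_mult_eq mult.assoc mult.commute)
  then have "x ^ (q ^ (s * i)) = (x ^ (q ^ ((s mod m) * i))) ^ (q ^ (m * ((s div m) * i)))"
    by (simp add: power_mult[symmetric] power_add)
  also have "\<dots> = x ^ (q ^ ((s mod m) * i))" by (rule frob_mt[OF assms])
  finally show ?thesis .
qed

lemma gab_cover:
  fixes C :: "(nat \<Rightarrow> 'a::{field,finite}) set"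
  assumes card: "card (UNIV :: 'a set) = q ^ m" and m: "m \<ge> 2" and q: "q > 0" and n: "n \<ge> 1"
    and gab: "gen_gabidulin q m n k C"
  shows "\<exists>s\<in>{1..<m}. \<exists>h\<in>vecs (n - 1). C \<subseteq> vspan (gB q n k s h)"
proof -
  obtain s and g :: "nat \<Rightarrow> 'a" where cop: "coprime s m" and ind: "lin_indep_on (Fsub q) {..<n} g"
    and C: "C = vspan (map (\<lambda>i. \<lambda>j. if j < n then g j ^ (q ^ (s * i)) else 0) [0..<k])"
    using gab unfolding gen_gabidulin_def by blast
  have g0: "g 0 \<noteq> 0" using indep_nonzero[OF ind _ _ q] n by simp
  define s' where "s' = s mod m"
  have s'1: "s' \<noteq> 0"
  proof
    assume "s' = 0"
    then have "m dvd s" unfolding s'_def by auto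
    then have "is_unit m" using cop by (metis coprime_common_divisor dvd_refl)
    then show False using m by simp
  qed
  have s'm: "s' < m" unfolding s'_def using m by simp
  define h where "h j = (if j < n - 1 then g (Suc j) / g 0 else 0)" for j
  have hv: "h \<in> vecs (n - 1)" by (simp add: vecs_def h_def)
  have key: "g j ^ (q ^ (s * i)) = g 0 ^ (q ^ (s' * i)) * gnorm h j ^ (q ^ (s' * i))" if "j < n" for i j
  proof (cases "j = 0")
    case True then show ?thesis unfolding gnorm_def s'_def using frob[OF card] by simp
  next
    case False
    then have "gnorm h j = g j / g 0" unfolding gnorm_def h_def using that by simp
    then have "g 0 ^ (q ^ (s' * i)) * gnorm h j ^ (q ^ (s' * i)) = g j ^ (q ^ (s' * i))"
      using g0 by (simp add: power_divide)
    then show ?thesis unfolding s'_def using frob[OF card] by simp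
  qed
  have "C \<subseteq> vspan (gB q n k s' h)"
  proof
    fix v assume "v \<in> C"
    then obtain c where v: "v = comb c (map (\<lambda>i. \<lambda>j. if j < n then g j ^ (q ^ (s * i)) else 0) [0..<k])"
      unfolding C vspan_comb by blast
    define c' where "c' i = c i * g 0 ^ (q ^ (s' * i))" for i
    have "v = comb c' (gB q n k s' h)"
    proof
      fix j
      show "v j = comb c' (gB q n k s' h) j"
        unfolding v comb_def gB_def c'_def using key by (auto intro!: sum.cong simp: mult.assoc)
    qed
    then show "v \<in> vspan (gB q n k s' h)" by (auto simp: vspan_comb)
  qed
  moreover have "s' \<in> {1..<m}" using s'1 s'm by simp
  ultimately show ?thesis using hv by blast
qed

lemma gab_count:
  assumes card: "card (UNIV :: 'a set) = q ^ m" and m: "m \<ge> 2" and q: "q > 0" and n: "n \<ge> 1"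
  shows "card {G \<in> Gs k n. gen_gabidulin q m n k (vspan (G :: (nat \<Rightarrow> 'a::{field,finite}) list))}
     \<le> (m - 1) * card (UNIV :: 'a set) ^ (n - 1) * (card (UNIV :: 'a set) ^ k) ^ k"
proof -
  define P where "P = {1..<m} \<times> (vecs (n - 1) :: (nat \<Rightarrow> 'a) set)"
  define A where "A p = {G \<in> Gs k n. set G \<subseteq> vspan (gB q n k (fst p) (snd p) :: (nat \<Rightarrow> 'a) list)}" for p
  have sub: "{G \<in> Gs k n. gen_gabidulin q m n k (vspan (G :: (nat \<Rightarrow> 'a) list))} \<subseteq> (\<Union>p\<in>P. A p)"
  proof
    fix G :: "(nat \<Rightarrow> 'a) list" assume G: "G \<in> {G \<in> Gs k n. gen_gabidulin q m n k (vspan G)}"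
    then obtain s h where sh: "s \<in> {1..<m}" "h \<in> vecs (n - 1)" "vspan G \<subseteq> vspan (gB q n k s h)"
      using gab_cover[OF card m q n] by blast
    then have "G \<in> A (s, h)" using G set_sub_vspan[of G] unfolding A_def by auto
    then show "G \<in> (\<Union>p\<in>P. A p)" using sh unfolding P_def by blast
  qed
  have fP: "finite P" unfolding P_def by (simp add: finite_vecs)
  have "card {G \<in> Gs k n. gen_gabidulin q m n k (vspan (G :: (nat \<Rightarrow> 'a) list))} \<le> card (\<Union>p\<in>P. A p)"
    by (rule card_mono[OF _ sub]) (simp add: fP A_def finite_Gs)
  also have "\<dots> \<le> (\<Sum>p\<in>P. card (A p))" by (rule card_UN_le[OF fP])
  also have "\<dots> \<le> (\<Sum>p\<in>P. (card (UNIV :: 'a set) ^ k) ^ k)"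
    by (rule sum_mono) (unfold A_def, rule sub_count, simp add: gB_def)
  also have "\<dots> = card P * (card (UNIV :: 'a set) ^ k) ^ k" by simp
  also have "card P = (m - 1) * card (UNIV :: 'a set) ^ (n - 1)"
    unfolding P_def by (simp add: card_cartesian_product card_vecs)
  finally show ?thesis .
qed


lemma rk_zero: assumes "q > 0" shows "rk q n (\<lambda>_. 0 :: 'a::field) = 0"
proof -
  obtain J where J: "J \<subseteq> {..<n}" "lin_indep_on (Fsub q) J (\<lambda>_. 0 :: 'a)" "card J = rk q n (\<lambda>_. 0 :: 'a)"
    by (rule rk_obtain)
  have "J = {}"
  proof (rule ccontr)
    assume "J \<noteq> {}"
    then obtain j where "j \<in> J" by blast
    moreover have "finite J" using J(1) finite_subset by blast
    ultimately show False using indep_nonzero[OF J(2) _ _ assms] by auto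
  qed
  then show ?thesis using J(3) by simp
qed

lemma card_UNIV_ge2: "card (UNIV :: 'a::{field,finite} set) \<ge> 2"
proof -
  have "{0, 1::'a} \<subseteq> UNIV" by simp
  then have "card {0, 1::'a} \<le> card (UNIV :: 'a set)" by (rule card_mono[rotated]) simp
  then show ?thesis by simp
qed

lemma good_MRD:
  fixes G :: "(nat \<Rightarrow> 'a::{field,finite}) list"
  assumes q: "q > 0" and k: "k \<ge> 1" and n: "n = k + d" and G: "G \<in> Gs k n" and good: "\<not> badG q k n d G"
  shows "is_MRD q n k (vspan G)"
proof -
  have lG: "length G = k" and sG: "set G \<subseteq> vecs n" using G by (auto simp: Gs_def)
  have big: "d < rk q n (comb y G)" if "y \<in> X0 k" for y
    using good that unfolding badG_def by (meson not_le)
  have ind: "vindep G"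
    unfolding vindep_def
  proof (rule allI, rule impI)
    fix c :: "nat \<Rightarrow> 'a"
    assume c0: "(\<lambda>j. \<Sum>i<length G. c i * (G ! i) j) = (\<lambda>j. 0)"
    define x where "x i = (if i < k then c i else 0)" for i
    have "comb x G = comb c G" by (rule comb_cong) (simp add: x_def lG)
    then have cx: "comb x G = (\<lambda>_. 0)" using c0 by (simp add: comb_def)
    have "x \<notin> X0 k"
    proof
      assume "x \<in> X0 k"
      then have "d < rk q n (comb x G)" by (rule big)
      then show False using cx rk_zero[where 'a='a, OF q] by simp
    qed
    moreover have "x \<in> vecs k" by (simp add: vecs_def x_def)
    ultimately have "x = (\<lambda>_. 0)" unfolding X0_def by simp
    show "\<forall>i<length G. c i = 0"
    proof (intro allI impI)
      fix i assume "i < length G"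
      moreover have "x i = 0" using \<open>x = (\<lambda>_. 0)\<close> by simp
      ultimately show "c i = 0" using lG by (simp add: x_def)
    qed
  qed
  have lin: "is_linear_code n k (vspan G)" unfolding is_linear_code_def using lG sG ind by blast
  define D where "D = {rk q n (\<lambda>j. u j - v j) | u v. u \<in> vspan G \<and> v \<in> vspan G \<and> u \<noteq> v}"
  have lower: "d + 1 \<le> r" if rD: "r \<in> D" for r
  proof -
    obtain u v where uv: "r = rk q n (\<lambda>j. u j - v j)" "u \<in> vspan G" "v \<in> vspan G" "u \<noteq> v"
      using rD unfolding D_def by blast
    obtain c c' where u: "u = comb c G" and v: "v = comb c' G" using uv(2,3) unfolding vspan_comb by blast
    define y where "y i = (if i < k then c i - c' i else 0)" for i
    have "comb y G = comb (\<lambda>i. c i - c' i) G" by (rule comb_cong) (simp add: y_def lG)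
    then have cy: "comb y G = (\<lambda>j. u j - v j)" using u v comb_diff by simp
    have "y \<noteq> (\<lambda>_. 0)"
    proof
      assume "y = (\<lambda>_. 0)"
      then have "comb y G = (\<lambda>_. 0)" by (simp add: comb_def)
      then have z: "(\<lambda>j. u j - v j) = (\<lambda>_. 0)" using cy by simp
      have "u = v"
      proof
        fix j show "u j = v j" using fun_cong[OF z, of j] by simp
      qed
      then show False using uv(4) by simp
    qed
    moreover have "y \<in> vecs k" by (simp add: vecs_def y_def)
    ultimately have "y \<in> X0 k" by (simp add: X0_def)
    then show ?thesis using big[OF \<open>y \<in> X0 k\<close>] cy uv(1) by simp
  qed
  define phi where "phi x = (\<lambda>j. if j < k - 1 then comb x G j else 0)" for x
  have "phi ` vecs k \<subseteq> vecs (k - 1)" by (auto simp: phi_def vecs_def)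
  have "\<not> inj_on phi (vecs k)"
  proof
    assume "inj_on phi (vecs k)"
    then have "card (vecs k :: (nat \<Rightarrow> 'a) set) \<le> card (vecs (k - 1) :: (nat \<Rightarrow> 'a) set)"
      using card_inj_on_le[OF _ \<open>phi ` vecs k \<subseteq> vecs (k - 1)\<close>] finite_vecs by blast
    then have "card (UNIV :: 'a set) ^ k \<le> card (UNIV :: 'a set) ^ (k - 1)" by (simp add: card_vecs)
    moreover have "card (UNIV :: 'a set) ^ (k - 1) < card (UNIV :: 'a set) ^ k"
      using card_UNIV_ge2[where 'a='a] k by (intro power_strict_increasing) auto
    ultimately show False by simp
  qed
  then obtain x x' where xx: "x \<in> vecs k" "x' \<in> vecs k" "x \<noteq> x'" "phi x = phi x'"
    unfolding inj_on_def by blast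
  define u where "u = comb x G"
  define v where "v = comb x' G"
  define y where "y i = x i - x' i" for i
  have cy: "comb y G = (\<lambda>j. u j - v j)" unfolding y_def u_def v_def by (rule comb_diff)
  have "y \<in> X0 k"
  proof -
    have "y \<in> vecs k" using xx(1,2) by (simp add: vecs_def y_def)
    moreover have "y \<noteq> (\<lambda>_. 0)"
    proof
      assume "y = (\<lambda>_. 0)"
      then have z: "(\<lambda>i. x i - x' i) = (\<lambda>_. 0)" unfolding y_def by simp
      have "x = x'"
      proof
        fix j show "x j = x' j" using fun_cong[OF z, of j] by simp
      qed
      then show False using xx(3) by simp
    qed
    ultimately show ?thesis by (simp add: X0_def)
  qed
  then have rkb: "d < rk q n (\<lambda>j. u j - v j)" using big[OF \<open>y \<in> X0 k\<close>] cy by simp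
  have "u \<noteq> v"
  proof
    assume "u = v"
    then have "(\<lambda>j. u j - v j) = (\<lambda>_. 0)" by simp
    then show False using rkb rk_zero[where 'a='a, OF q] by simp
  qed
  have zero_front: "u j - v j = 0" if "j < k - 1" for j
  proof -
    have "phi x j = phi x' j" using xx(4) by simp
    then show ?thesis using that unfolding phi_def u_def v_def by simp
  qed
  have "rk q n (\<lambda>j. u j - v j) \<le> card {j \<in> {..<n}. u j - v j \<noteq> 0}" by (rule rk_le_support[OF q])
  also have "\<dots> \<le> card {k - 1..<n}"
  proof (rule card_mono)
    show "{j \<in> {..<n}. u j - v j \<noteq> 0} \<subseteq> {k - 1..<n}"
    proof
      fix j assume j: "j \<in> {j \<in> {..<n}. u j - v j \<noteq> 0}"
      then have "\<not> j < k - 1" using zero_front by blast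
      then show "j \<in> {k - 1..<n}" using j by simp
    qed
  qed simp
  also have "\<dots> = d + 1" using n k by simp
  finally have upper: "rk q n (\<lambda>j. u j - v j) \<le> d + 1" .
  have uvC: "u \<in> vspan G" "v \<in> vspan G" unfolding u_def v_def vspan_comb by auto
  have inD: "d + 1 \<in> D"
  proof -
    have "d + 1 = rk q n (\<lambda>j. u j - v j)" using upper rkb by simp
    then show ?thesis unfolding D_def using uvC \<open>u \<noteq> v\<close> by blast
  qed
  have fD: "finite D"
  proof (rule finite_subset)
    show "D \<subseteq> {..n}" unfolding D_def using rk_le_n by auto
  qed simp
  have "min_rank_dist q n (vspan G) = d + 1"
    unfolding min_rank_dist_def D_def[symmetric] by (rule Min_eqI[OF fD lower inD])
  then show ?thesis unfolding is_MRD_def using lin n by simp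
qed


definition Ssum :: "nat \<Rightarrow> nat \<Rightarrow> nat \<Rightarrow> real" where
  "Ssum q k n = (\<Sum>r = 0..k. real r * gauss_binom q k (k - r) * gauss_binom q (n - k) r * real q ^ (r ^ 2))"

lemma bound_ineq_iff:
  assumes "m \<ge> 1" "k \<ge> 1" "k + 1 \<le> n" "q \<ge> 2"
  shows "bound_ineq q k n m \<longleftrightarrow>
    1 - Ssum q k n / real q ^ m > (real m - 1) / real q ^ ((m - 1) * ((n - k - 1) * (k - 1)))"
proof -
  have e1: "real q powi (- int m) = 1 / real q ^ m"
    by (simp add: power_int_minus power_int_of_nat divide_inverse)
  have eq: "(int m - 1) * (int n - int k - 1) * (int k - 1) = int ((m - 1) * ((n - k - 1) * (k - 1)))"
    using assms by (simp add: of_nat_diff mult.assoc)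
  have e2: "real q powi (- ((int m - 1) * (int n - int k - 1) * (int k - 1))) = 1 / real q ^ ((m - 1) * ((n - k - 1) * (k - 1)))"
    unfolding eq power_int_minus power_int_of_nat by (simp add: divide_inverse)
  have e3: "(\<Sum>r = 0..k. real r * gauss_binom q k (k - r) * gauss_binom q (n - k) r * real q ^ (r ^ 2) * real q powi (- int m))
      = Ssum q k n / real q ^ m"
    unfolding Ssum_def e1 by (simp add: sum_divide_distrib)
  show ?thesis unfolding bound_ineq_def e2 e3 by simp
qed

lemma Ssum_ge:
  assumes q: "q \<ge> 2" and k: "k \<ge> 2" and n: "k + 2 \<le> n"
  shows "Ssum q k n \<ge> gauss_binom q n k - 1 + real q ^ 4"
proof -
  define N where "N r = gauss_binom q k (k - r) * gauss_binom q (n - k) r * real q ^ (r ^ 2)" for r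
  have N0: "N r \<ge> 0" for r unfolding N_def using gb_nonneg[of q] q by simp
  have H: "gauss_binom q n k = (\<Sum>r = 0..k. N r)"
  proof -
    have "gauss_binom q (k + (n - k)) k = (\<Sum>j = 0..k. gauss_binom q k (k - j) * gauss_binom q (n - k) j * real q ^ (j * (k + j - k)))"
      by (rule vandermonde[OF q])
    also have "\<dots> = (\<Sum>r = 0..k. N r)" unfolding N_def by (simp add: power2_eq_square)
    finally show ?thesis using n by simp
  qed
  have S: "Ssum q k n = (\<Sum>r = 0..k. real r * N r)" unfolding Ssum_def N_def by (simp add: mult.assoc)
  have "Ssum q k n - gauss_binom q n k = (\<Sum>r = 0..k. (real r - 1) * N r)"
    unfolding S H by (simp add: sum_subtractf left_diff_distrib)
  also have "\<dots> \<ge> (\<Sum>r \<in> {0, 2}. (real r - 1) * N r)"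
  proof (rule sum_mono2)
    show "{0, 2} \<subseteq> {0..k}" using k by auto
    fix r assume "r \<in> {0..k} - {0, 2}"
    then have "r \<ge> 1" by auto
    then show "0 \<le> (real r - 1) * N r" using N0 by simp
  qed simp
  moreover have "(\<Sum>r \<in> {0, 2}. (real r - 1) * N r) = N 2 - N 0" by simp
  moreover have "N 0 = 1" unfolding N_def using gb_self[OF q] by simp
  moreover have "N 2 \<ge> real q ^ 4"
  proof -
    have "gauss_binom q k (k - 2) \<ge> 1" using gb_ge1[OF q] by simp
    moreover have "gauss_binom q (n - k) 2 \<ge> 1" using gb_ge1[OF q] n by simp
    moreover have "real q ^ (2 ^ 2) \<ge> real q ^ 4" by simp
    ultimately have "gauss_binom q k (k - 2) * gauss_binom q (n - k) 2 * real q ^ (2 ^ 2) \<ge> 1 * 1 * real q ^ 4"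
      by (intro mult_mono) auto
    then show ?thesis unfolding N_def by simp
  qed
  ultimately show ?thesis by linarith
qed

lemma q4: assumes "q \<ge> 2" shows "real q ^ 4 \<ge> 16" "real q ^ 4 \<ge> real q"
proof -
  show "real q ^ 4 \<ge> 16"
  proof -
    have "real q ^ 4 \<ge> 2 ^ 4" using assms by (intro power_mono) auto
    then show ?thesis by simp
  qed
  have "real q ^ 4 \<ge> real q ^ 1" using assms by (intro power_increasing) auto
  then show "real q ^ 4 \<ge> real q" by simp
qed

lemma Ssum_ge15: assumes "q \<ge> 2" "k \<ge> 2" "k + 2 \<le> n" shows "Ssum q k n \<ge> gauss_binom q n k + 15"
  using Ssum_ge[OF assms] q4[OF assms(1)] by linarith

lemma Ssum_pos: assumes "q \<ge> 2" "k \<ge> 2" "k + 2 \<le> n" shows "Ssum q k n \<ge> 16" "Ssum q k n \<ge> real q"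
proof -
  have "gauss_binom q n k \<ge> 1" using gb_ge1 assms by simp
  then show "Ssum q k n \<ge> 16" "Ssum q k n \<ge> real q" using Ssum_ge[OF assms] q4[OF assms(1)] by linarith+
qed

lemma two_pow: "2 * j \<le> (2::nat) ^ j" if "j \<ge> 1" for j
  using that
proof (induction j)
  case 0 then show ?case by simp
next
  case (Suc j)
  show ?case
  proof (cases "j = 0")
    case True then show ?thesis by simp
  next
    case False then have "2 * j \<le> 2 ^ j" using Suc by simp
    moreover have "2 \<le> (2::nat) ^ j" using power_increasing[of 1 j "2::nat"] False by simp
    ultimately show ?thesis by simp
  qed
qed

lemma exists_m:
  assumes q: "q \<ge> 2" and k: "k \<ge> 2" and n: "k + 2 \<le> n"
  shows "\<exists>m. 0 < m \<and> bound_ineq q k n m"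
proof -
  define c where "c = (n - k - 1) * (k - 1)"
  have c1: "c \<ge> 1"
  proof -
    have "n - k - 1 \<ge> 1" "k - 1 \<ge> 1" using k n by auto
    then have "1 * 1 \<le> (n - k - 1) * (k - 1)" by (rule mult_le_mono)
    then show ?thesis unfolding c_def by simp
  qed
  define S where "S = Ssum q k n"
  obtain m0 :: nat where m0: "real m0 > 2 * S" using reals_Archimedean2 by blast
  define m where "m = m0 + 2"
  have m2: "m \<ge> 2" unfolding m_def by simp
  have qm: "real q ^ m \<ge> 2 ^ m" using q by (intro power_mono) auto
  have "(2::real) ^ m \<ge> real m"
  proof -
    have "real m < 2 ^ m" by (rule of_nat_less_two_power)
    then show ?thesis by simp
  qed
  then have "real q ^ m > 2 * S" using qm m0 unfolding m_def by simp
  moreover have "S \<ge> 0" using Ssum_pos(1)[OF q k n] unfolding S_def by simp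
  ultimately have t1: "S / real q ^ m < 1 / 2"
    using q by (simp add: divide_less_eq)
  have "real q ^ ((m - 1) * c) \<ge> 2 ^ (m - 1)"
  proof -
    have "real q ^ ((m - 1) * c) \<ge> 2 ^ ((m - 1) * c)" using q by (intro power_mono) auto
    moreover have "(2::real) ^ (m - 1) \<le> 2 ^ ((m - 1) * c)" using c1 by (intro power_increasing) auto
    ultimately show ?thesis by (meson order_trans)
  qed
  moreover have "real (2 * (m - 1)) \<le> 2 ^ (m - 1)"
  proof -
    have "2 * (m - 1) \<le> (2::nat) ^ (m - 1)" using two_pow m2 by simp
    then have "real (2 * (m - 1)) \<le> real ((2::nat) ^ (m - 1))" by (simp only: of_nat_le_iff)
    then show ?thesis by simp
  qed
  ultimately have "2 * (real m - 1) \<le> real q ^ ((m - 1) * c)" using m2 by (simp add: of_nat_diff)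
  then have t2: "(real m - 1) / real q ^ ((m - 1) * c) \<le> 1 / 2"
    using q by (simp add: divide_le_eq)
  have t3: "(real m - 1) / real q ^ ((m - 1) * c) < 1 - S / real q ^ m" using t1 t2 by linarith
  have iff: "bound_ineq q k n m \<longleftrightarrow> 1 - Ssum q k n / real q ^ m > (real m - 1) / real q ^ ((m - 1) * ((n - k - 1) * (k - 1)))"
    by (rule bound_ineq_iff) (use m2 k n q in auto)
  have "bound_ineq q k n m" using iff t3 unfolding S_def c_def by blast
  then show ?thesis using m2 by (intro exI[of _ m]) simp
qed


lemma dec_step:
  assumes q: "q \<ge> 2" and c: "c \<ge> 1" and j: "j \<ge> 1"
  shows "real (Suc j) / real q ^ (Suc j * c) \<le> real j / real q ^ (j * c)"
proof -
  have qc: "real q ^ c \<ge> 2"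
  proof -
    have "real q ^ 1 \<le> real q ^ c" using q c by (intro power_increasing) auto
    then have "real q \<le> real q ^ c" by (simp only: power_one_right)
    moreover have "real q \<ge> 2" using q by simp
    ultimately show ?thesis by linarith
  qed
  have pos: "real q ^ (j * c) > 0" using q by simp
  have "real j * 2 \<le> real j * real q ^ c" using qc by (intro mult_left_mono) auto
  moreover have "real j \<ge> 1" using j by simp
  ultimately have "1 + real j \<le> real j * real q ^ c" by linarith
  then have "real (Suc j) \<le> real j * real q ^ c" by simp
  then have "real (Suc j) / (real q ^ (j * c) * real q ^ c) \<le> real j * real q ^ c / (real q ^ (j * c) * real q ^ c)"
    using pos q by (intro divide_right_mono) auto
  also have "\<dots> = real j / real q ^ (j * c)" using q by simp
  finally show ?thesis by (simp add: power_add algebra_simps)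
qed

lemma dec:
  assumes q: "q \<ge> 2" and c: "c \<ge> 1" and j: "j \<ge> 1"
  shows "real (j + t) / real q ^ ((j + t) * c) \<le> real j / real q ^ (j * c)"
proof (induction t)
  case 0 then show ?case by simp
next
  case (Suc t)
  have "real (Suc (j + t)) / real q ^ (Suc (j + t) * c) \<le> real (j + t) / real q ^ ((j + t) * c)"
    by (rule dec_step[OF q c]) (use j in simp)
  then show ?case using Suc by simp
qed

lemma mono_bound:
  assumes q: "q \<ge> 2" and k: "k \<ge> 2" and n: "k + 2 \<le> n" and M: "bound_ineq q k n M" "M \<ge> 1" "M \<le> m"
  shows "bound_ineq q k n m \<and> M \<ge> 2"
proof -
  define c where "c = (n - k - 1) * (k - 1)"
  have c1: "c \<ge> 1"
  proof -
    have "n - k - 1 \<ge> 1" "k - 1 \<ge> 1" using k n by auto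
    then have "1 * 1 \<le> (n - k - 1) * (k - 1)" by (rule mult_le_mono)
    then show ?thesis unfolding c_def by simp
  qed
  define S where "S = Ssum q k n"
  have iffM: "bound_ineq q k n M \<longleftrightarrow> 1 - S / real q ^ M > (real M - 1) / real q ^ ((M - 1) * c)"
    unfolding S_def c_def by (rule bound_ineq_iff) (use M q k n in auto)
  have iffm: "bound_ineq q k n m \<longleftrightarrow> 1 - S / real q ^ m > (real m - 1) / real q ^ ((m - 1) * c)"
    unfolding S_def c_def by (rule bound_ineq_iff) (use M q k n in auto)
  have hM: "1 - S / real q ^ M > (real M - 1) / real q ^ ((M - 1) * c)" using iffM M by blast
  have S0: "S \<ge> real q" using Ssum_pos(2)[OF q k n] unfolding S_def .
  have "(real M - 1) / real q ^ ((M - 1) * c) \<ge> 0" using M(2) by simp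
  then have "S / real q ^ M < 1" using hM by linarith
  then have SM: "S < real q ^ M" using q by (simp add: divide_less_eq)
  have M2: "M \<ge> 2"
  proof (rule ccontr)
    assume "\<not> M \<ge> 2"
    then have "M = 1" using M(2) by simp
    then show False using SM S0 by simp
  qed
  have t1: "S / real q ^ m \<le> S / real q ^ M"
  proof -
    have "real q ^ M \<le> real q ^ m" using q M(3) by (intro power_increasing) auto
    moreover have "S \<ge> 0" using S0 by simp
    ultimately show ?thesis using q by (intro divide_left_mono) auto
  qed
  have t2: "(real m - 1) / real q ^ ((m - 1) * c) \<le> (real M - 1) / real q ^ ((M - 1) * c)"
  proof -
    define t where "t = m - M"
    have t: "(M - 1) + t = m - 1" using M(3) M2 unfolding t_def by simp
    have "real ((M - 1) + t) / real q ^ (((M - 1) + t) * c) \<le> real (M - 1) / real q ^ ((M - 1) * c)"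
      by (rule dec[OF q c1]) (use M2 in simp)
    moreover have "real ((M - 1) + t) = real m - 1" using t M(3) M2 by (simp add: of_nat_diff)
    moreover have "real (M - 1) = real M - 1" using M2 by (simp add: of_nat_diff)
    ultimately show ?thesis unfolding t by simp
  qed
  have "bound_ineq q k n m" using iffm hM t1 t2 by linarith
  then show ?thesis using M2 by simp
qed

lemma exp_id: fixes n k :: nat assumes "k \<ge> 1" "k + 1 \<le> n" shows "n * k = (n - 1 + k * k) + (n - k - 1) * (k - 1)"
proof -
  define a where "a = n - (k + 1)"
  have a: "n = k + 1 + a" using assms(2) unfolding a_def by linarith
  define b where "b = k - 1"
  have b: "k = b + 1" using assms(1) unfolding b_def by linarith
  show ?thesis unfolding a b by (simp add: algebra_simps)
qed


lemma main_exists: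
  assumes card: "card (UNIV :: 'a::{field,finite} set) = q ^ m"
    and q: "q \<ge> 2" and k: "k \<ge> 2" and n: "k + 2 \<le> n" and m: "m \<ge> 2"
    and bi: "bound_ineq q k n m"
  shows "\<exists>C :: (nat \<Rightarrow> 'a) set. is_MRD q n k C \<and> \<not> gen_gabidulin q m n k C"
proof -
  define Q where "Q = card (UNIV :: 'a set)"
  define Qr where "Qr = real Q"
  have Qr: "Qr = real q ^ m" unfolding Qr_def Q_def card by simp
  have Q1: "Q \<ge> 1" unfolding Q_def by (simp add: Suc_leI finite_UNIV_card_ge_0)
  define d where "d = n - k"
  have nd: "n = k + d" and dn: "d \<le> n" using n unfolding d_def by auto
  define c where "c = (n - k - 1) * (k - 1)"
  define S where "S = Ssum q k n"
  define H where "H = gauss_binom q n k"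
  define bad where "bad = {G \<in> Gs k n. badG q k n d (G :: (nat \<Rightarrow> 'a) list)}"
  define gab where "gab = {G \<in> Gs k n. gen_gabidulin q m n k (vspan (G :: (nat \<Rightarrow> 'a) list))}"
  define L where "L = card {w \<in> vecs n. rk q n (w :: nat \<Rightarrow> 'a) \<le> d}"
  have iff: "bound_ineq q k n m \<longleftrightarrow> 1 - S / real q ^ m > (real m - 1) / real q ^ ((m - 1) * c)"
    unfolding S_def c_def by (rule bound_ineq_iff) (use m q k n in auto)
  have hb: "1 - S / Qr > (real m - 1) / real q ^ ((m - 1) * c)" using iff bi Qr by simp
  have S15: "S \<ge> H + 15" unfolding S_def H_def by (rule Ssum_ge15[OF q k n])
  have Qpos: "Qr > 0" using Qr q by simp
  have "(real m - 1) / real q ^ ((m - 1) * c) \<ge> 0" using m by simp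
  then have "S / Qr < 1" using hb by linarith
  then have SQ: "S < Qr" using Qpos by (simp add: divide_less_eq)
  have H0: "H \<ge> 0" unfolding H_def using gb_nonneg q by simp
  have Lb: "real L \<le> H * Qr ^ d"
  proof -
    have "real L \<le> gauss_binom q n d * real (card (UNIV :: 'a set)) ^ d"
      unfolding L_def by (rule L_bound[OF q dn])
    moreover have "gauss_binom q n d = H" unfolding H_def d_def using gb_sym[OF q, of k n] n by simp
    ultimately show ?thesis unfolding Qr_def Q_def by simp
  qed
  have bc: "(Q - 1) * card bad \<le> (Q ^ k - 1) * (L * (Q ^ n) ^ (k - 1))"
    unfolding bad_def L_def Q_def by (rule bad_count) (use q in simp)
  then have f1: "real ((Q - 1) * card bad) \<le> real ((Q ^ k - 1) * (L * (Q ^ n) ^ (k - 1)))" by (rule of_nat_mono)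
  have f2: "real ((Q - 1) * card bad) = (Qr - 1) * real (card bad)"
    using Q1 unfolding Qr_def by (simp add: of_nat_diff)
  have f3: "real ((Q ^ k - 1) * (L * (Q ^ n) ^ (k - 1))) = (Qr ^ k - 1) * (real L * Qr ^ (n * (k - 1)))"
  proof -
    have "Q ^ k \<ge> 1" using Q1 by simp
    then show ?thesis unfolding Qr_def by (simp add: of_nat_diff power_mult)
  qed
  have b1: "(Qr - 1) * real (card bad) \<le> (Qr ^ k - 1) * (real L * Qr ^ (n * (k - 1)))"
    using f1 unfolding f2 f3 .
  have "(Qr ^ k - 1) * (real L * Qr ^ (n * (k - 1))) \<le> Qr ^ k * (H * Qr ^ d * Qr ^ (n * (k - 1)))"
  proof (rule mult_mono)
    show "Qr ^ k - 1 \<le> Qr ^ k" by simp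
    show "real L * Qr ^ (n * (k - 1)) \<le> H * Qr ^ d * Qr ^ (n * (k - 1))"
      using Lb Qpos by (intro mult_right_mono) auto
    show "0 \<le> Qr ^ k" using Qpos by simp
    show "0 \<le> real L * Qr ^ (n * (k - 1))" using Qpos by simp
  qed
  also have "Qr ^ k * (H * Qr ^ d * Qr ^ (n * (k - 1))) = H * Qr ^ (n * k)"
  proof -
    have "k + d + n * (k - 1) = n * k" using nd k by (simp add: algebra_simps mult_eq_if)
    then have "Qr ^ k * Qr ^ d * Qr ^ (n * (k - 1)) = Qr ^ (n * k)" by (metis power_add)
    then show ?thesis by (simp add: algebra_simps)
  qed
  finally have b2: "(Qr - 1) * real (card bad) \<le> H * Qr ^ (n * k)" using b1 by linarith
  have Q1r: "Qr > 1" using SQ S15 H0 by linarith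
  have HS: "H * Qr \<le> S * (Qr - 1)"
  proof -
    have "S * (Qr - 1) - H * Qr = Qr * (S - H) - S" by (simp add: algebra_simps)
    also have "\<dots> \<ge> Qr * 1 - S"
    proof -
      have "Qr * (S - H) \<ge> Qr * 1" using S15 Qpos by (intro mult_left_mono) auto
      then show ?thesis by linarith
    qed
    finally show ?thesis using SQ by linarith
  qed
  have badb: "real (card bad) \<le> S / Qr * Qr ^ (n * k)"
  proof -
    have "real (card bad) \<le> H * Qr ^ (n * k) / (Qr - 1)" using b2 Q1r by (simp add: le_divide_eq mult.commute)
    also have "\<dots> = (H / (Qr - 1)) * Qr ^ (n * k)" by simp
    also have "\<dots> \<le> (S / Qr) * Qr ^ (n * k)"
    proof (rule mult_right_mono)
      show "H / (Qr - 1) \<le> S / Qr" using HS Q1r Qpos by (simp add: divide_le_eq le_divide_eq field_simps)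
      show "0 \<le> Qr ^ (n * k)" using Qpos by simp
    qed
    finally show ?thesis .
  qed
  have gc: "card gab \<le> (m - 1) * Q ^ (n - 1) * (Q ^ k) ^ k"
    unfolding gab_def Q_def by (rule gab_count[OF card m]) (use q n in auto)
  have gabb: "real (card gab) \<le> (real m - 1) / real q ^ ((m - 1) * c) * Qr ^ (n * k)"
  proof -
    have "real (card gab) \<le> real ((m - 1) * Q ^ (n - 1) * (Q ^ k) ^ k)" using gc by (rule of_nat_mono)
    also have "\<dots> = (real m - 1) * real q ^ (m * (n - 1 + k * k))"
      using m unfolding Q_def card by (simp add: of_nat_diff power_mult[symmetric] power_add[symmetric] algebra_simps)
    also have "\<dots> \<le> (real m - 1) / real q ^ ((m - 1) * c) * Qr ^ (n * k)"
    proof -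
      have e: "n * k = (n - 1 + k * k) + c" unfolding c_def by (rule exp_id) (use k n in auto)
      have "real q ^ (m * (n - 1 + k * k)) * real q ^ ((m - 1) * c) \<le> real q ^ (m * (n * k))"
      proof -
        have "m * (n - 1 + k * k) + (m - 1) * c \<le> m * (n * k)"
          unfolding e by (simp add: algebra_simps mult_le_mono)
        then have "real q ^ (m * (n - 1 + k * k) + (m - 1) * c) \<le> real q ^ (m * (n * k))"
          using q by (intro power_increasing) auto
        then show ?thesis by (simp add: power_add)
      qed
      then have "real q ^ (m * (n - 1 + k * k)) \<le> Qr ^ (n * k) / real q ^ ((m - 1) * c)"
        unfolding Qr using q by (simp add: le_divide_eq power_mult)
      then have "(real m - 1) * real q ^ (m * (n - 1 + k * k)) \<le> (real m - 1) * (Qr ^ (n * k) / real q ^ ((m - 1) * c))"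
        using m by (intro mult_left_mono) auto
      then show ?thesis by simp
    qed
    finally show ?thesis .
  qed
  have tot: "real (card bad) + real (card gab) < Qr ^ (n * k)"
  proof -
    have "real (card bad) + real (card gab) \<le> (S / Qr + (real m - 1) / real q ^ ((m - 1) * c)) * Qr ^ (n * k)"
      using badb gabb by (simp add: algebra_simps)
    also have "\<dots> < 1 * Qr ^ (n * k)"
      using hb Qpos by (intro mult_strict_right_mono) auto
    finally show ?thesis by simp
  qed
  have cardGs: "real (card (Gs k n :: (nat \<Rightarrow> 'a) list set)) = Qr ^ (n * k)"
    unfolding card_Gs Qr_def Q_def by (simp add: power_mult)
  have "\<exists>G \<in> Gs k n. G \<notin> bad \<and> G \<notin> gab"
  proof (rule ccontr)
    assume "\<not> ?thesis"
    then have "Gs k n \<subseteq> bad \<union> gab" by blast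
    then have "card (Gs k n :: (nat \<Rightarrow> 'a) list set) \<le> card (bad \<union> gab)"
      by (rule card_mono[rotated]) (auto simp: bad_def gab_def intro: finite_subset[OF _ finite_Gs])
    also have "\<dots> \<le> card bad + card gab" by (rule card_Un_le)
    finally have "real (card (Gs k n :: (nat \<Rightarrow> 'a) list set)) \<le> real (card bad) + real (card gab)"
      by (metis of_nat_add of_nat_mono)
    then show False using tot cardGs by simp
  qed
  then obtain G where G: "G \<in> Gs k n" "G \<notin> bad" "G \<notin> gab" by blast
  have "is_MRD q n k (vspan G)"
    by (rule good_MRD[OF _ _ nd G(1)]) (use G(1,2) q k in \<open>auto simp: bad_def\<close>)
  moreover have "\<not> gen_gabidulin q m n k (vspan G)" using G(1,3) by (simp add: gab_def)
  ultimately show ?thesis by blast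
qed


theorem theorem4p12:
  fixes q k n m :: nat
  assumes "\<exists>p e. prime p \<and> 0 < e \<and> q = p ^ e"
    and "1 < k" and "k + 1 < n"
    and "card (UNIV :: 'a::{field,finite} set) = q ^ m"
  shows "(\<exists>m'. 0 < m' \<and> bound_ineq q k n m') \<and>
         (m \<ge> M_bound q k n \<longrightarrow>
            (\<exists>C :: (nat \<Rightarrow> 'a) set. is_MRD q n k C \<and> \<not> gen_gabidulin q m n k C))"
proof -
  obtain p e where pe: "prime p" "0 < e" "q = p ^ e" using assms(1) by blast
  have p2: "p \<ge> 2" using pe(1) by (simp add: prime_ge_2_nat)
  have "p ^ 1 \<le> p ^ e" using pe(2) p2 by (intro power_increasing) auto
  then have q: "q \<ge> 2" using pe(3) p2 by simp
  have k: "k \<ge> 2" using assms(2) by simp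
  have n: "k + 2 \<le> n" using assms(3) by simp
  have ex: "\<exists>m'. 0 < m' \<and> bound_ineq q k n m'" by (rule exists_m[OF q k n])
  moreover have "m \<ge> M_bound q k n \<longrightarrow> (\<exists>C :: (nat \<Rightarrow> 'a) set. is_MRD q n k C \<and> \<not> gen_gabidulin q m n k C)"
  proof
    assume mM: "m \<ge> M_bound q k n"
    define M where "M = M_bound q k n"
    have "0 < M \<and> bound_ineq q k n M"
      unfolding M_def M_bound_def by (rule LeastI_ex[OF ex])
    then have "bound_ineq q k n m \<and> M \<ge> 2"
      using mono_bound[OF q k n, of M m] mM unfolding M_def by auto
    then show "\<exists>C :: (nat \<Rightarrow> 'a) set. is_MRD q n k C \<and> \<not> gen_gabidulin q m n k C"
      using main_exists[OF assms(4) q k n] mM unfolding M_def by auto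
  qed
  ultimately show ?thesis by blast
qed

end
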